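(* Let $n\geq 11$ with $n\equiv 3\pmod 4$ and let $r=4$. Let $V=\{v_1,\dots,v_n\}$ and consider the labelled path graph with edges: $\{v_1,v_2\}$ with label $0$; $\{v_2,v_3\}$ with label $1$; $\{v_3,v_4\}$ with the two labels $0$ and $2$; for $4\leq s\leq n-3$, $\{v_s,v_{s+1}\}$ with label $1$ if $s$ is even and label $0$ if $s$ is odd; $\{v_{n-2},v_{n-1}\}$ with label $2$; and $\{v_{n-1},v_n\}$ with label $3$. Then $G=\mathrm{Sym}(V)\cong S_n$ and $(G,(\rho_0,\rho_1,\rho_2,\rho_3))$ is a string C-group.
   Context: A string group generated by involutions (sggi) of rank $r$ is a pair $(G,(\rho_0,\dots,\rho_{r-1}))$ where $\rho_0,\dots,\rho_{r-1}$ are involutions generating the group $G$ such that $(\rho_i\rho_j)^2=1$ whenever $|i-j|\geq 2$. It is a string C-group if in addition it satisfies the intersection property: for all $J,K\subseteq\{0,\dots,r-1\}$, $\langle \rho_j : j\in J\rangle\cap\langle\rho_k : k\in K\rangle=\langle \rho_j : j\in J\cap K\rangle$. Labelled-graph convention: the vertex set $V$ is finite, and each edge $\{a,b\}$ ($a\neq b$) carries one or more labels from $\{0,\dots,r-1\}$, the edges carrying any given label being pairwise disjoint; $\rho_k$ denotes the permutation of $V$ equal to the product of the transpositions $(a\,b)$ over all edges $\{a,b\}$ carrying label $k$, and $G=\langle\rho_0,\dots,\rho_{r-1}\rangle\leq \mathrm{Sym}(V)$. *)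

theory Defs
  imports "HOL-Algebra.Sym_Groups" "HOL-Algebra.Generated_Groups"
begin

text \<open>Permutation determined by a set E of pairwise disjoint edges (2-element sets):
  the product of the transpositions (a b) over all edges {a,b} in E.\<close>
definition edge_perm :: "'a set set \<Rightarrow> 'a \<Rightarrow> 'a" where
  "edge_perm E x = (if \<exists>y. y \<noteq> x \<and> {x, y} \<in> E then (THE y. y \<noteq> x \<and> {x, y} \<in> E) else x)"

text \<open>Labels carried by the path edge {v_s, v_(s+1)} (vertices v_i identified with i, 1 <= i <= n).\<close>
definition path_label :: "nat \<Rightarrow> nat \<Rightarrow> nat \<Rightarrow> bool" where
  "path_label n s k \<longleftrightarrow>
     (s = 1 \<and> k = 0) \<or> (s = 2 \<and> k = 1) \<or> (s = 3 \<and> (k = 0 \<or> k = 2)) \<or>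
     (4 \<le> s \<and> s \<le> n - 3 \<and> k = (if even s then 1 else 0)) \<or>
     (s = n - 2 \<and> k = 2) \<or> (s = n - 1 \<and> k = 3)"

definition path_edges :: "nat \<Rightarrow> nat \<Rightarrow> nat set set" where
  "path_edges n k = {{s, s + 1} | s. 1 \<le> s \<and> s \<le> n - 1 \<and> path_label n s k}"

definition rho :: "nat \<Rightarrow> nat \<Rightarrow> nat \<Rightarrow> nat" where
  "rho n k = edge_perm (path_edges n k)"

text \<open>String group generated by involutions (of rank r) inside an ambient group Amb:
  the group is the subgroup generated by rho_0..rho_(r-1).\<close>
definition sggi :: "('a, 'b) monoid_scheme \<Rightarrow> nat \<Rightarrow> (nat \<Rightarrow> 'a) \<Rightarrow> bool" where
  "sggi Amb r \<rho> \<longleftrightarrow>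
     (\<forall>i<r. \<rho> i \<in> carrier Amb \<and> \<rho> i \<noteq> \<one>\<^bsub>Amb\<^esub> \<and> \<rho> i \<otimes>\<^bsub>Amb\<^esub> \<rho> i = \<one>\<^bsub>Amb\<^esub>) \<and>
     (\<forall>i<r. \<forall>j<r. 2 \<le> \<bar>int i - int j\<bar> \<longrightarrow>
        (\<rho> i \<otimes>\<^bsub>Amb\<^esub> \<rho> j) \<otimes>\<^bsub>Amb\<^esub> (\<rho> i \<otimes>\<^bsub>Amb\<^esub> \<rho> j) = \<one>\<^bsub>Amb\<^esub>)"

definition string_C_group :: "('a, 'b) monoid_scheme \<Rightarrow> nat \<Rightarrow> (nat \<Rightarrow> 'a) \<Rightarrow> bool" where
  "string_C_group Amb r \<rho> \<longleftrightarrow> sggi Amb r \<rho> \<and>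
     (\<forall>J K. J \<subseteq> {..<r} \<longrightarrow> K \<subseteq> {..<r} \<longrightarrow>
        generate Amb (\<rho> ` J) \<inter> generate Amb (\<rho> ` K) = generate Amb (\<rho> ` (J \<inter> K)))"

end

theory Submission
  imports Defs "HOL-Combinatorics.Permutations"
begin


definition r0 :: "nat \<Rightarrow> nat \<Rightarrow> nat" where
 "r0 n x = (if 1 \<le> x \<and> x \<le> n-3 then (if odd x then x+1 else x-1) else x)"
definition r1 :: "nat \<Rightarrow> nat \<Rightarrow> nat" where
 "r1 n x = (if 2 \<le> x \<and> x \<le> n-2 then (if even x then x+1 else x-1) else x)"
definition r2 :: "nat \<Rightarrow> nat \<Rightarrow> nat" where
 "r2 n x = (if x=3 then 4 else if x=4 then 3 else if x=n-2 then n-1 else if x=n-1 then n-2 else x)"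
definition r3 :: "nat \<Rightarrow> nat \<Rightarrow> nat" where
 "r3 n x = (if x=n-1 then n else if x=n then n-1 else x)"

lemma edge_perm_char:
  assumes "\<And>z. (z \<noteq> x \<and> {x,z} \<in> E) \<longleftrightarrow> (z = f x \<and> f x \<noteq> x)"
  shows "edge_perm E x = f x"
proof (cases "f x = x")
  case True
  then show ?thesis using assms unfolding edge_perm_def by auto
next
  case False
  then have "\<exists>y. y \<noteq> x \<and> {x, y} \<in> E" using assms by blast
  moreover have "(THE y. y \<noteq> x \<and> {x, y} \<in> E) = f x"
    using assms False by (intro the_equality) auto
  ultimately show ?thesis unfolding edge_perm_def by simp
qed

lemma path_edges_iff:
  "(z \<noteq> x \<and> {x,z} \<in> path_edges n k) \<longleftrightarrow>
   (1 \<le> x \<and> x \<le> n-1 \<and> path_label n x k \<and> z = Suc x) \<or> (2 \<le> x \<and> x \<le> n \<and> path_label n (x-1) k \<and> x = Suc z)"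
  unfolding path_edges_def
  by (auto simp: doubleton_eq_iff)

context fixes n :: nat assumes n11: "n \<ge> 11" and n4: "n mod 4 = 3" begin

lemma rho0: "rho n 0 = r0 n"
proof
  fix x show "rho n 0 x = r0 n x" unfolding rho_def
    apply (rule edge_perm_char)
    unfolding path_edges_iff path_label_def r0_def using n11 n4 by (auto; presburger)
qed

lemma rho1: "rho n 1 = r1 n"
proof
  fix x show "rho n 1 x = r1 n x" unfolding rho_def
    apply (rule edge_perm_char)
    unfolding path_edges_iff path_label_def r1_def using n11 n4 by (auto; presburger)
qed
lemma rho2: "rho n 2 = r2 n"
proof
  fix x show "rho n 2 x = r2 n x" unfolding rho_def
    apply (rule edge_perm_char)
    unfolding path_edges_iff path_label_def r2_def using n11 n4 by (auto; presburger)
qed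
lemma rho3: "rho n 3 = r3 n"
proof
  fix x show "rho n 3 x = r3 n x" unfolding rho_def
    apply (rule edge_perm_char)
    unfolding path_edges_iff path_label_def r3_def using n11 n4 by (auto; presburger)
qed
end


lemma invol_permutes:
  assumes "\<And>x. f (f x) = x" "\<And>x. x \<notin> S \<Longrightarrow> f x = x"
  shows "f permutes S"
  unfolding permutes_def using assms by metis

fun pp :: "nat \<Rightarrow> nat \<Rightarrow> nat \<Rightarrow> nat" where
  "pp a 0 = id"
| "pp a (Suc m) = Transposition.transpose (a + 2*m) (a + 2*m + 1) \<circ> pp a m"

lemma pp_perm: "permutation (pp a m)"
proof (induction m)
  case (Suc m)
  show ?case unfolding pp.simps by (rule permutation_compose[OF permutation_swap_id Suc])
qed simp

lemma pp_even: "evenperm (pp a m) \<longleftrightarrow> even m"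
proof (induction m)
  case (Suc m)
  show ?case unfolding pp.simps
    by (subst evenperm_comp) (auto simp: Suc pp_perm permutation_swap_id evenperm_swap)
qed simp

lemma pp_apply: "pp a m x = (if a \<le> x \<and> x < a + 2*m then (if even (x - a) then x+1 else x-1) else x)"
proof (induction m arbitrary: x)
  case 0 then show ?case by simp
next
  case (Suc m)
  show ?case by (simp add: Suc Transposition.transpose_def) presburger
qed

lemma transpose_conj:
  assumes "\<And>x. r (r x) = x"
  shows "r \<circ> Transposition.transpose a b \<circ> r = Transposition.transpose (r a) (r b)"
  using assms by (auto simp: fun_eq_iff Transposition.transpose_def)

definition Adj :: "nat \<Rightarrow> nat \<Rightarrow> nat \<Rightarrow> bool" where
  "Adj n x y \<longleftrightarrow> 1 \<le> x \<and> x \<le> n-2 \<and> 1 \<le> y \<and> y \<le> n-2 \<and>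
     (y = x+2 \<or> x = y+2 \<or> (x=1 \<and> y=2) \<or> (x=2 \<and> y=1) \<or> (x=n-3 \<and> y=n-2) \<or> (x=n-2 \<and> y=n-3))"

lemma Adj1: "n \<ge> 11 \<Longrightarrow> Adj n 1 z \<Longrightarrow> z = 2 \<or> z = 3" unfolding Adj_def by linarith
lemma Adj2: "n \<ge> 11 \<Longrightarrow> Adj n 2 z \<Longrightarrow> z = 1 \<or> z = 4" unfolding Adj_def by linarith
lemma Adjy: "n \<ge> 11 \<Longrightarrow> Adj n y z \<Longrightarrow> 3 \<le> y \<Longrightarrow> y + 2 \<le> n - 2 \<Longrightarrow> z = y - 2 \<or> z = y + 2"
  unfolding Adj_def by linarith
lemma Adj_step: "n \<ge> 11 \<Longrightarrow> 3 \<le> x \<Longrightarrow> x \<le> n-2 \<Longrightarrow> Adj n (x-2) x"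
  unfolding Adj_def by linarith

lemma cyc_fix:
  assumes n: "n \<ge> 11" and inj: "inj p" and adj: "\<And>x y. Adj n x y \<Longrightarrow> Adj n (p x) (p y)"
    and p1: "p 1 = 1" and p2: "p 2 = 2"
  shows "1 \<le> x \<Longrightarrow> x \<le> n-2 \<Longrightarrow> p x = x"
proof (induction x rule: less_induct)
  case (less x)
  show ?case
  proof (cases "x \<le> 2")
    case True then have "x = 1 \<or> x = 2" using less.prems by linarith
    then show ?thesis using p1 p2 by blast
  next
    case False
    then have x3: "x \<ge> 3" by simp
    have a: "Adj n (x-2) x" using Adj_step n x3 less.prems by blast
    have "p (x-2) = x-2" using less.IH[of "x-2"] x3 less.prems by linarith
    then have b: "Adj n (x-2) (p x)" using adj[OF a] by simp
    show ?thesis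
    proof (cases "x = 3")
      case True
      then have "p x = 2 \<or> p x = 3" using b Adj1[OF n] by simp
      moreover have "p x \<noteq> p 2" using inj True by (simp add: inj_eq)
      ultimately show ?thesis using True p2 by simp
    next
      case False
      show ?thesis
      proof (cases "x = 4")
        case True
        then have "p x = 1 \<or> p x = 4" using b Adj2[OF n] by simp
        moreover have "p x \<noteq> p 1" using inj True by (simp add: inj_eq)
        ultimately show ?thesis using True p1 by simp
      next
        case False
        then have x5: "x \<ge> 5" using `x \<noteq> 3` x3 by simp
        then have "p x = x - 2 - 2 \<or> p x = x - 2 + 2" using Adjy[OF n b] less.prems by linarith
        moreover have "p (x-4) = x-4" using less.IH[of "x-4"] x5 less.prems by linarith
        moreover have "p x \<noteq> p (x-4)" using inj x5 by (simp add: inj_eq)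
        ultimately show ?thesis using x5 by auto
      qed
    qed
  qed
qed

lemma Adj_R0: assumes "n = 4*k+3" "2 \<le> k" "Adj n x y" shows "Adj n (r0 n x) (r0 n y)"
  using assms(3) unfolding Adj_def r0_def assms(1)
  apply (elim conjE disjE)
  apply (simp_all split: if_split)
  apply presburger+
  done
lemma Adj_R1: assumes "n = 4*k+3" "2 \<le> k" "Adj n x y" shows "Adj n (r1 n x) (r1 n y)"
  using assms(3) unfolding Adj_def r1_def assms(1)
  apply (elim conjE disjE)
  apply (simp_all split: if_split)
  apply presburger+
  done

locale L = fixes n :: nat assumes n11: "n \<ge> 11" and n4: "n mod 4 = 3" begin

abbreviation "R0 \<equiv> r0 n"
abbreviation "R1 \<equiv> r1 n"
abbreviation "R2 \<equiv> r2 n"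
abbreviation "R3 \<equiv> r3 n"
abbreviation "SG \<equiv> sym_group n"
abbreviation "Gen S \<equiv> generate (sym_group n) S"

lemma R0_inv: "R0 (R0 x) = x" using n11 n4 unfolding r0_def by (auto; presburger)
lemma R1_inv: "R1 (R1 x) = x" using n11 n4 unfolding r1_def by (auto; presburger)
lemma R2_inv: "R2 (R2 x) = x" using n11 n4 unfolding r2_def by (auto; presburger)
lemma R3_inv: "R3 (R3 x) = x" using n11 n4 unfolding r3_def by (auto; presburger)

lemma R0_perm: "R0 permutes {1..n}" by (rule invol_permutes[OF R0_inv]) (auto simp: r0_def)
lemma R1_perm: "R1 permutes {1..n}" by (rule invol_permutes[OF R1_inv]) (auto simp: r1_def)
lemma R2_perm: "R2 permutes {1..n}" using n11 by (intro invol_permutes[OF R2_inv]) (auto simp: r2_def)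
lemma R3_perm: "R3 permutes {1..n}" using n11 by (intro invol_permutes[OF R3_inv]) (auto simp: r3_def)

lemma R0_pp: "R0 = pp 1 ((n-3) div 2)"
  using n11 n4 by (auto simp: fun_eq_iff r0_def pp_apply) presburger+
lemma R1_pp: "R1 = pp 2 ((n-3) div 2)"
  using n11 n4 by (auto simp: fun_eq_iff r1_def pp_apply) presburger+
lemma R2_tt: "R2 = Transposition.transpose 3 4 \<circ> Transposition.transpose (n-2) (n-1)"
  using n11 n4 by (auto simp: fun_eq_iff r2_def Transposition.transpose_def)
lemma R3_t: "R3 = Transposition.transpose (n-1) n"
  using n11 n4 by (auto simp: fun_eq_iff r3_def Transposition.transpose_def)

lemma R0_even: "evenperm R0" unfolding R0_pp pp_even using n4 n11 by presburger
lemma R1_even: "evenperm R1" unfolding R1_pp pp_even using n4 n11 by presburger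
lemma R2_even: "evenperm R2" unfolding R2_tt using n11
  by (subst evenperm_comp) (auto simp: permutation_swap_id evenperm_swap)

lemma grp: "group SG" by (rule sym_group_is_group)

lemma R_carr: "R0 \<in> carrier SG" "R1 \<in> carrier SG" "R2 \<in> carrier SG" "R3 \<in> carrier SG"
  unfolding sym_group_carrier by (rule R0_perm R1_perm R2_perm R3_perm)+

lemma R_comp_self: "R0 \<circ> R0 = id" "R1 \<circ> R1 = id" "R2 \<circ> R2 = id" "R3 \<circ> R3 = id"
  by (simp_all add: fun_eq_iff R0_inv R1_inv R2_inv R3_inv)

lemma Rs_carr: "{R0,R1,R2,R3} \<subseteq> carrier SG" using R_carr by auto

lemma R_inv_grp: "inv\<^bsub>SG\<^esub> R0 = R0" "inv\<^bsub>SG\<^esub> R1 = R1" "inv\<^bsub>SG\<^esub> R2 = R2" "inv\<^bsub>SG\<^esub> R3 = R3"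
  by (rule group.inv_equality[OF grp]; simp only: sym_group_mult sym_group_one R_comp_self R_carr)+

lemma Rs_inv: "h \<in> {R0,R1,R2,R3} \<Longrightarrow> inv\<^bsub>SG\<^esub> h = h"
  using R_inv_grp by auto

lemma gen_sub:
  assumes "S \<subseteq> {R0,R1,R2,R3}" "id \<in> Q" "S \<subseteq> Q" "\<And>p q. p \<in> Q \<Longrightarrow> q \<in> Q \<Longrightarrow> p \<circ> q \<in> Q"
  shows "Gen S \<subseteq> Q"
proof
  fix x assume "x \<in> Gen S"
  then show "x \<in> Q"
  proof (induction rule: generate.induct)
    case one then show ?case unfolding sym_group_one by (rule assms(2))
  next
    case (incl h) then show ?case using assms(3) by auto
  next
    case (inv h)
    then have "inv\<^bsub>SG\<^esub> h = h" using assms(1) by (intro Rs_inv) blast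
    then show ?case using inv assms(3) by (simp add: subset_iff)
  next
    case (eng h1 h2) then show ?case unfolding sym_group_mult by (intro assms(4))
  qed
qed

lemma gen_id: "id \<in> Gen S" using generate.one[of SG S] by (simp add: sym_group_one)
lemma gen_incl: "h \<in> S \<Longrightarrow> h \<in> Gen S" by (rule generate.incl)
lemma gen_comp: "a \<in> Gen S \<Longrightarrow> b \<in> Gen S \<Longrightarrow> a \<circ> b \<in> Gen S"
  using generate.eng[of a SG S b] by (simp add: sym_group_mult)
lemma gen_carr: "S \<subseteq> {R0,R1,R2,R3} \<Longrightarrow> Gen S \<subseteq> carrier SG"
  by (rule group.generate_incl[OF grp]) (rule subset_trans[OF _ Rs_carr])
lemma gen_mono: "S \<subseteq> T \<Longrightarrow> Gen S \<subseteq> Gen T"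
  by (rule group.mono_generate[OF grp])

lemma gen_cancel:
  assumes S: "S \<subseteq> {R0,R1,R2,R3}" and a: "a \<in> Gen S" and g: "g \<in> carrier SG" and ag: "a \<circ> g \<in> Gen S"
  shows "g \<in> Gen S"
proof -
  have sub: "subgroup (Gen S) SG" by (rule group.generate_is_subgroup[OF grp]) (rule subset_trans[OF S Rs_carr])
  have ac: "a \<in> carrier SG" using a gen_carr[OF S] by blast
  have i: "inv\<^bsub>SG\<^esub> a \<in> Gen S" by (rule subgroup.m_inv_closed[OF sub a])
  have "inv\<^bsub>SG\<^esub> a \<circ> (a \<circ> g) \<in> Gen S" by (rule gen_comp[OF i ag])
  moreover have "inv\<^bsub>SG\<^esub> a \<circ> a = id" using group.l_inv[OF grp ac] unfolding sym_group_mult sym_group_one .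
  ultimately show ?thesis by (simp add: comp_assoc[symmetric])
qed

lemma gen_cancel_r:
  assumes S: "S \<subseteq> {R0,R1,R2,R3}" and a: "a \<in> Gen S" and g: "g \<in> carrier SG" and ag: "g \<circ> a \<in> Gen S"
  shows "g \<in> Gen S"
proof -
  have sub: "subgroup (Gen S) SG" by (rule group.generate_is_subgroup[OF grp]) (rule subset_trans[OF S Rs_carr])
  have ac: "a \<in> carrier SG" using a gen_carr[OF S] by blast
  have i: "inv\<^bsub>SG\<^esub> a \<in> Gen S" by (rule subgroup.m_inv_closed[OF sub a])
  have "(g \<circ> a) \<circ> inv\<^bsub>SG\<^esub> a \<in> Gen S" by (rule gen_comp[OF ag i])
  moreover have "a \<circ> inv\<^bsub>SG\<^esub> a = id" using group.r_inv[OF grp ac] unfolding sym_group_mult sym_group_one .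
  ultimately show ?thesis by (simp add: comp_assoc)
qed

lemma gen_coset:
  assumes S: "S \<subseteq> {R0,R1,R2,R3}" and s: "s \<in> {R0,R1,R2,R3}" and comm: "\<And>h. h \<in> S \<Longrightarrow> h \<circ> s = s \<circ> h"
  shows "Gen (insert s S) \<subseteq> Gen S \<union> (\<lambda>g. g \<circ> s) ` Gen S"
proof -
  have ss: "s \<circ> s = id" using s R_comp_self by auto
  have C: "Gen S \<subseteq> {g. g \<circ> s = s \<circ> g}"
  proof (rule gen_sub[OF S])
    show "id \<in> {g. g \<circ> s = s \<circ> g}" by simp
    show "S \<subseteq> {g. g \<circ> s = s \<circ> g}" using comm by blast
    fix p q assume "p \<in> {g. g \<circ> s = s \<circ> g}" "q \<in> {g. g \<circ> s = s \<circ> g}"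
    then have "p \<circ> s = s \<circ> p" "q \<circ> s = s \<circ> q" by auto
    then have "(p \<circ> q) \<circ> s = s \<circ> (p \<circ> q)" by (metis comp_assoc)
    then show "p \<circ> q \<in> {g. g \<circ> s = s \<circ> g}" by simp
  qed
  show ?thesis
  proof (rule gen_sub)
    show "insert s S \<subseteq> {R0,R1,R2,R3}" using S s by auto
    show "id \<in> Gen S \<union> (\<lambda>g. g \<circ> s) ` Gen S" using gen_id by auto
    show "insert s S \<subseteq> Gen S \<union> (\<lambda>g. g \<circ> s) ` Gen S"
      using gen_id gen_incl by (auto intro!: image_eqI[where x=id])
    fix p q assume p: "p \<in> Gen S \<union> (\<lambda>g. g \<circ> s) ` Gen S" and q: "q \<in> Gen S \<union> (\<lambda>g. g \<circ> s) ` Gen S"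
    show "p \<circ> q \<in> Gen S \<union> (\<lambda>g. g \<circ> s) ` Gen S"
    proof -
      { fix a b assume a: "a \<in> Gen S" and b: "b \<in> Gen S"
        have bs: "b \<circ> s = s \<circ> b" using C b by auto
        have "a \<circ> b \<in> Gen S" using gen_comp a b .
        moreover have "a \<circ> (b \<circ> s) = (a \<circ> b) \<circ> s" by (simp add: comp_assoc)
        moreover have "(a \<circ> s) \<circ> b = (a \<circ> b) \<circ> s" using bs by (simp add: comp_assoc)
        moreover have "(a \<circ> s) \<circ> (b \<circ> s) = a \<circ> b" using bs ss
          by (metis comp_assoc comp_id)
        ultimately have "a \<circ> b \<in> Gen S" "a \<circ> (b \<circ> s) \<in> (\<lambda>g. g \<circ> s) ` Gen S"
          "(a \<circ> s) \<circ> b \<in> (\<lambda>g. g \<circ> s) ` Gen S" "(a \<circ> s) \<circ> (b \<circ> s) \<in> Gen S"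
          by auto }
      then show ?thesis using p q by blast
    qed
  qed
qed

end

context L begin
lemma n_form: obtains k where "n = 4*k+3" "2 \<le> k"
proof -
  have "n = 4*(n div 4)+3" using n4 by (metis div_mult_mod_eq mult.commute)
  moreover have "2 \<le> n div 4" using n11 by linarith
  ultimately show ?thesis using that by blast
qed
lemma R0_vals: "R0 1 = 2" "R0 2 = 1" "R0 3 = 4" "R0 4 = 3" "R0 (n-2) = n-2" "R0 (n-1) = n-1" "R0 n = n"
  using n11 unfolding r0_def by auto
lemma R1_vals: "R1 1 = 1" "R1 2 = 3" "R1 3 = 2" "R1 4 = 5" "R1 5 = 4" "R1 (n-3) = n-2" "R1 (n-2) = n-3" "R1 (n-1) = n-1" "R1 n = n"
proof -
  obtain k where k: "n = 4*k+3" "2 \<le> k" by (rule n_form)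
  show "R1 1 = 1" "R1 2 = 3" "R1 3 = 2" "R1 4 = 5" "R1 5 = 4" "R1 (n-3) = n-2" "R1 (n-2) = n-3" "R1 (n-1) = n-1" "R1 n = n"
    unfolding r1_def k(1) using k(2) by auto
qed
lemma R2_vals: "R2 1 = 1" "R2 2 = 2" "R2 3 = 4" "R2 4 = 3" "R2 5 = 5" "R2 (n-3) = n-3" "R2 (n-2) = n-1" "R2 (n-1) = n-2" "R2 n = n"
  using n11 unfolding r2_def by auto
lemma R3_vals: "R3 1 = 1" "R3 2 = 2" "R3 3 = 3" "R3 4 = 4" "R3 5 = 5" "R3 (n-3) = n-3" "R3 (n-2) = n-2" "R3 (n-1) = n" "R3 n = n-1"
  using n11 unfolding r3_def by auto

lemma R_perm': "permutation R0" "permutation R1" "permutation R2" "permutation R3"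
  using R0_perm R1_perm R2_perm R3_perm by (auto intro: permutes_imp_permutation)

lemma gen_perm: "S \<subseteq> {R0,R1,R2,R3} \<Longrightarrow> p \<in> Gen S \<Longrightarrow> p permutes {1..n}"
  using gen_carr sym_group_carrier by blast

lemma G012: "Gen {R0,R1,R2} \<subseteq> {p. p n = n \<and> evenperm p \<and> permutation p}"
proof (rule gen_sub)
  show "{R0,R1,R2} \<subseteq> {R0,R1,R2,R3}" by blast
  show "id \<in> {p. p n = n \<and> evenperm p \<and> permutation p}" by (simp add: permutation_id)
  show "{R0,R1,R2} \<subseteq> {p. p n = n \<and> evenperm p \<and> permutation p}"
    using R0_vals R1_vals R2_vals R0_even R1_even R2_even R_perm' by auto
  fix p q assume "p \<in> {p. p n = n \<and> evenperm p \<and> permutation p}" "q \<in> {p. p n = n \<and> evenperm p \<and> permutation p}"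
  then show "p \<circ> q \<in> {p. p n = n \<and> evenperm p \<and> permutation p}"
    by (simp add: evenperm_comp permutation_compose)
qed

lemma G123: "Gen {R1,R2,R3} \<subseteq> {p. p 1 = 1}"
proof (rule gen_sub)
  show "{R1,R2,R3} \<subseteq> {R0,R1,R2,R3}" by blast
  show "{R1,R2,R3} \<subseteq> {p. p 1 = 1}" using R1_vals(1) R2_vals(1) R3_vals(1) by blast
qed simp_all

lemma G023: "Gen {R0,R2,R3} \<subseteq> {p. p 1 \<in> {1,2} \<and> p 2 \<in> {1,2}}"
proof (rule gen_sub)
  show "{R0,R2,R3} \<subseteq> {R0,R1,R2,R3}" by blast
  show "{R0,R2,R3} \<subseteq> {p. p 1 \<in> {1,2} \<and> p 2 \<in> {1,2}}" using R0_vals(1,2) R2_vals(1,2) R3_vals(1,2) by blast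
qed auto

lemma G013: "Gen {R0,R1,R3} \<subseteq> {p. \<forall>x. 1 \<le> x \<and> x \<le> n-2 \<longrightarrow> 1 \<le> p x \<and> p x \<le> n-2}"
proof (rule gen_sub)
  show "{R0,R1,R3} \<subseteq> {R0,R1,R2,R3}" by blast
  show "id \<in> {p. \<forall>x. 1 \<le> x \<and> x \<le> n-2 \<longrightarrow> 1 \<le> p x \<and> p x \<le> n-2}" by simp
  have "\<forall>x. 1 \<le> x \<and> x \<le> n-2 \<longrightarrow> 1 \<le> R0 x \<and> R0 x \<le> n-2"
    unfolding r0_def using n11 by auto
  moreover have "\<forall>x. 1 \<le> x \<and> x \<le> n-2 \<longrightarrow> 1 \<le> R1 x \<and> R1 x \<le> n-2"
  proof -
    obtain k where k: "n = 4*k+3" "2 \<le> k" by (rule n_form)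
    show ?thesis unfolding r1_def k(1) by (auto; presburger)
  qed
  moreover have "\<forall>x. 1 \<le> x \<and> x \<le> n-2 \<longrightarrow> 1 \<le> R3 x \<and> R3 x \<le> n-2"
    unfolding r3_def using n11 by auto
  ultimately show "{R0,R1,R3} \<subseteq> {p. \<forall>x. 1 \<le> x \<and> x \<le> n-2 \<longrightarrow> 1 \<le> p x \<and> p x \<le> n-2}" by blast
qed (auto)

lemma G01: "Gen {R0,R1} \<subseteq> {p. p (n-1) = n-1 \<and> p n = n \<and> (\<forall>x y. Adj n x y \<longrightarrow> Adj n (p x) (p y))}"
proof (rule gen_sub)
  obtain k where k: "n = 4*k+3" "2 \<le> k" by (rule n_form)
  show "{R0,R1} \<subseteq> {p. p (n-1) = n-1 \<and> p n = n \<and> (\<forall>x y. Adj n x y \<longrightarrow> Adj n (p x) (p y))}"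
    using R0_vals R1_vals Adj_R0[OF k] Adj_R1[OF k] by auto
qed auto

lemma G23: "Gen {R2,R3} \<subseteq> {p. (\<forall>x. x \<notin> {3,4,n-2,n-1,n} \<longrightarrow> p x = x) \<and> p 3 \<in> {3,4} \<and> p 4 \<in> {3,4}}"
proof (rule gen_sub)
  show "{R2,R3} \<subseteq> {p. (\<forall>x. x \<notin> {3,4,n-2,n-1,n} \<longrightarrow> p x = x) \<and> p 3 \<in> {3,4} \<and> p 4 \<in> {3,4}}"
    using R2_vals R3_vals unfolding r2_def r3_def by auto
qed auto

lemma comm02: "R0 \<circ> R2 = R2 \<circ> R0"
proof -
  obtain k where k: "n = 4*k+3" "2 \<le> k" by (rule n_form)
  show ?thesis unfolding fun_eq_iff r0_def r2_def k(1) o_def by (auto; presburger)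
qed
lemma comm03: "R0 \<circ> R3 = R3 \<circ> R0"
proof -
  obtain k where k: "n = 4*k+3" "2 \<le> k" by (rule n_form)
  show ?thesis unfolding fun_eq_iff r0_def r3_def k(1) o_def by (auto; presburger)
qed
lemma comm13: "R1 \<circ> R3 = R3 \<circ> R1"
proof -
  obtain k where k: "n = 4*k+3" "2 \<le> k" by (rule n_form)
  show ?thesis unfolding fun_eq_iff r1_def r3_def k(1) o_def by (auto; presburger)
qed

end

context L begin

lemma L01: assumes p: "p \<in> Gen {R0,R1}" and p1: "p 1 = 1" shows "p = id \<or> p = R1"
proof -
  have Q: "p (n-1) = n-1" "p n = n" "\<And>x y. Adj n x y \<Longrightarrow> Adj n (p x) (p y)" using G01 p by blast+
  have pp: "p permutes {1..n}" using gen_perm[OF _ p] by blast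
  have inj: "inj p" using permutes_inj[OF pp] .
  have fixall: "q = id" if q: "q \<in> Gen {R0,R1}" "q 1 = 1" "q 2 = 2" for q
  proof
    fix x
    have Qq: "q (n-1) = n-1" "q n = n" "\<And>x y. Adj n x y \<Longrightarrow> Adj n (q x) (q y)" using G01 q(1) by blast+
    have qp: "q permutes {1..n}" using gen_perm[OF _ q(1)] by blast
    have c: "1 \<le> x \<Longrightarrow> x \<le> n-2 \<Longrightarrow> q x = x"
      by (rule cyc_fix[OF n11 permutes_inj[OF qp] Qq(3) q(2) q(3)])
    show "q x = id x"
    proof (cases "x \<in> {1..n}")
      case True
      then have "(1 \<le> x \<and> x \<le> n-2) \<or> x = n-1 \<or> x = n" by auto
      then show ?thesis using c Qq by auto
    next
      case False then show ?thesis using permutes_not_in[OF qp] by simp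
    qed
  qed
  show ?thesis
  proof (cases "p 2 = 2")
    case True then show ?thesis using fixall[OF p p1] by simp
  next
    case False
    have "Adj n 1 2" using n11 unfolding Adj_def by (simp; linarith)
    then have "Adj n 1 (p 2)" using Q(3) p1 by metis
    then have p2: "p 2 = 3" using Adj1[OF n11] False by blast
    have q: "R1 \<circ> p \<in> Gen {R0,R1}" using gen_comp[OF gen_incl p] by simp
    have "(R1 \<circ> p) 1 = 1" using p1 R1_vals by simp
    moreover have "(R1 \<circ> p) 2 = 2" using p2 R1_vals by simp
    ultimately have "R1 \<circ> p = id" using fixall[OF q] by blast
    then have "R1 \<circ> (R1 \<circ> p) = R1" by simp
    then have "p = R1" using R_comp_self by (simp add: comp_assoc[symmetric])
    then show ?thesis by simp
  qed
qed

abbreviation "T34 \<equiv> Transposition.transpose (3::nat) 4"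
abbreviation "TN \<equiv> Transposition.transpose (n-2) (n-1)"

lemma L23: assumes p: "p \<in> Gen {R2,R3}" and pn: "p n = n"
  shows "p = id \<or> p = T34 \<or> p = TN \<or> p = R2"
proof -
  have Q: "\<And>x. x \<notin> {3,4,n-2,n-1,n} \<Longrightarrow> p x = x" "p 3 \<in> {3,4}" "p 4 \<in> {3,4}" using G23 p by blast+
  have pp: "p permutes {1..n}" using gen_perm[OF _ p] by blast
  have inj: "inj p" using permutes_inj[OF pp] .
  have p34: "p 3 \<noteq> p 4" using inj by (simp add: inj_eq)
  have hi: "p x \<in> {n-2, n-1}" if x: "x \<in> {n-2,n-1}" for x
  proof (rule ccontr)
    assume c: "p x \<notin> {n-2, n-1}"
    have x34: "x \<noteq> 3" "x \<noteq> 4" "x \<noteq> n" using x n11 by auto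
    have "p x \<noteq> p 3" "p x \<noteq> p 4" "p x \<noteq> p n" using inj x34 by (simp_all add: inj_eq)
    then have "p x \<noteq> 3" "p x \<noteq> 4" "p x \<noteq> n" using Q(2,3) p34 pn by auto
    then have "p x \<notin> {3,4,n-2,n-1,n}" using c by auto
    then have "p (p x) = p x" using Q(1) by blast
    then have "p x = x" using inj by (simp add: inj_eq)
    then show False using c x by simp
  qed
  have a: "p (n-2) \<in> {n-2,n-1}" "p (n-1) \<in> {n-2,n-1}" using hi by auto
  have b: "p (n-2) \<noteq> p (n-1)" using inj n11 by (simp add: inj_eq)
  have n6: "n - 2 \<noteq> 3" "n-2 \<noteq> 4" "n-1 \<noteq> 3" "n-1\<noteq>4" "n-2 \<noteq> n" "n-1 \<noteq> n" "n-2 \<noteq> n-1" using n11 by auto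
  have R2t: "R2 = T34 \<circ> TN" by (rule R2_tt)
  have ext: "p = q" if "q 3 = p 3" "q 4 = p 4" "q (n-2) = p (n-2)" "q (n-1) = p (n-1)" "q n = p n"
     "\<And>x. x \<notin> {3,4,n-2,n-1,n} \<Longrightarrow> q x = x" for q
  proof
    fix x show "p x = q x" by (cases "x \<in> {3,4,n-2,n-1,n}") (use that Q(1) in auto)
  qed
  show ?thesis
  proof (cases "p 3 = 3")
    case True
    then have p4: "p 4 = 4" using Q(3) p34 by auto
    show ?thesis
    proof (cases "p (n-2) = n-2")
      case True
      then have "p (n-1) = n-1" using a b by auto
      have "p x = x" for x
        using True `p 3 = 3` p4 pn Q(1) `p (n-1) = n-1` by (cases "x \<in> {3,4,n-2,n-1,n}") auto
      then have "p = id" by (auto simp: fun_eq_iff)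
      then show ?thesis by simp
    next
      case False
      then have "p (n-2) = n-1" "p (n-1) = n-2" using a b by auto
      then have "p = TN" using `p 3 = 3` p4 pn n6 by (intro ext) (auto simp: Transposition.transpose_def)
      then show ?thesis by simp
    qed
  next
    case False
    then have p3: "p 3 = 4" "p 4 = 3" using Q(2,3) p34 by auto
    show ?thesis
    proof (cases "p (n-2) = n-2")
      case True
      then have "p (n-1) = n-1" using a b by auto
      then have "p = T34" using True p3 pn n6 by (intro ext) (auto simp: Transposition.transpose_def)
      then show ?thesis by simp
    next
      case False
      then have "p (n-2) = n-1" "p (n-1) = n-2" using a b by auto
      then have "p = R2" unfolding R2t using p3 pn n6 by (intro ext) (auto simp: Transposition.transpose_def)
      then show ?thesis by simp
    qed
  qed
qed

end

lemma blocks: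
  fixes p q :: "nat \<Rightarrow> nat"
  assumes pD: "(p 2 \<in> {2,5} \<and> p 5 \<in> {2,5} \<and> p 3 \<in> {3,4} \<and> p 4 \<in> {3,4}) \<or>
     (p 2 \<in> {3,4} \<and> p 5 \<in> {3,4} \<and> p 3 \<in> {2,5} \<and> p 4 \<in> {2,5})"
  and qD: "(q 2 \<in> {2,5} \<and> q 5 \<in> {2,5} \<and> q 3 \<in> {3,4} \<and> q 4 \<in> {3,4}) \<or>
     (q 2 \<in> {3,4} \<and> q 5 \<in> {3,4} \<and> q 3 \<in> {2,5} \<and> q 4 \<in> {2,5})"
  shows "((p (q 2) \<in> {2,5} \<and> p (q 5) \<in> {2,5} \<and> p (q 3) \<in> {3,4} \<and> p (q 4) \<in> {3,4}) \<or>
     (p (q 2) \<in> {3,4} \<and> p (q 5) \<in> {3,4} \<and> p (q 3) \<in> {2,5} \<and> p (q 4) \<in> {2,5})) \<and>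
    ((p (q 2) \<in> {3,4}) = ((p 2 \<in> {3,4}) \<noteq> (q 2 \<in> {3,4})))"
proof -
  have h25: "\<And>y A. y \<in> {2,5} \<Longrightarrow> p 2 \<in> A \<Longrightarrow> p 5 \<in> A \<Longrightarrow> p y \<in> A" by auto
  have h34: "\<And>y A. y \<in> {3,4} \<Longrightarrow> p 3 \<in> A \<Longrightarrow> p 4 \<in> A \<Longrightarrow> p y \<in> A" by auto
  have dj: "\<And>a::nat. a \<in> {2,5} \<Longrightarrow> a \<notin> {3,4}" by auto
  from pD qD show ?thesis
  proof (elim disjE conjE)
    assume a: "p 2 \<in> {2, 5}" "p 5 \<in> {2, 5}" "p 3 \<in> {3, 4}" "p 4 \<in> {3, 4}"
       "q 2 \<in> {2, 5}" "q 5 \<in> {2, 5}" "q 3 \<in> {3, 4}" "q 4 \<in> {3, 4}"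
    have b: "p (q 2) \<in> {2,5}" "p (q 5) \<in> {2,5}" "p (q 3) \<in> {3,4}" "p (q 4) \<in> {3,4}"
      by (rule h25[OF a(5) a(1) a(2)] h25[OF a(6) a(1) a(2)] h34[OF a(7) a(3) a(4)] h34[OF a(8) a(3) a(4)])+
    have "p (q 2) \<notin> {3,4}" "p 2 \<notin> {3,4}" "q 2 \<notin> {3,4}" using dj b a by blast+
    then show ?thesis using b by simp
  next
    assume a: "p 2 \<in> {2, 5}" "p 5 \<in> {2, 5}" "p 3 \<in> {3, 4}" "p 4 \<in> {3, 4}"
       "q 2 \<in> {3, 4}" "q 5 \<in> {3, 4}" "q 3 \<in> {2, 5}" "q 4 \<in> {2, 5}"
    have b: "p (q 2) \<in> {3,4}" "p (q 5) \<in> {3,4}" "p (q 3) \<in> {2,5}" "p (q 4) \<in> {2,5}"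
      by (rule h34[OF a(5) a(3) a(4)] h34[OF a(6) a(3) a(4)] h25[OF a(7) a(1) a(2)] h25[OF a(8) a(1) a(2)])+
    have "p 2 \<notin> {3,4}" using dj a by blast+
    then show ?thesis using b a by simp
  next
    assume a: "p 2 \<in> {3, 4}" "p 5 \<in> {3, 4}" "p 3 \<in> {2, 5}" "p 4 \<in> {2, 5}"
       "q 2 \<in> {2, 5}" "q 5 \<in> {2, 5}" "q 3 \<in> {3, 4}" "q 4 \<in> {3, 4}"
    have b: "p (q 2) \<in> {3,4}" "p (q 5) \<in> {3,4}" "p (q 3) \<in> {2,5}" "p (q 4) \<in> {2,5}"
      by (rule h25[OF a(5) a(1) a(2)] h25[OF a(6) a(1) a(2)] h34[OF a(7) a(3) a(4)] h34[OF a(8) a(3) a(4)])+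
    have "q 2 \<notin> {3,4}" using dj a by blast+
    then show ?thesis using b a by simp
  next
    assume a: "p 2 \<in> {3, 4}" "p 5 \<in> {3, 4}" "p 3 \<in> {2, 5}" "p 4 \<in> {2, 5}"
       "q 2 \<in> {3, 4}" "q 5 \<in> {3, 4}" "q 3 \<in> {2, 5}" "q 4 \<in> {2, 5}"
    have b: "p (q 2) \<in> {2,5}" "p (q 5) \<in> {2,5}" "p (q 3) \<in> {3,4}" "p (q 4) \<in> {3,4}"
      by (rule h34[OF a(5) a(3) a(4)] h34[OF a(6) a(3) a(4)] h25[OF a(7) a(1) a(2)] h25[OF a(8) a(1) a(2)])+
    have "p (q 2) \<notin> {3,4}" using dj b by blast+
    then show ?thesis using b a by simp
  qed
qed

context L begin

definition QQ :: "(nat \<Rightarrow> nat) \<Rightarrow> bool" where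
  "QQ p \<longleftrightarrow> p 1 = 1 \<and>
    ((p 2 \<in> {2,5} \<and> p 5 \<in> {2,5} \<and> p 3 \<in> {3,4} \<and> p 4 \<in> {3,4}) \<or>
     (p 2 \<in> {3,4} \<and> p 5 \<in> {3,4} \<and> p 3 \<in> {2,5} \<and> p 4 \<in> {2,5})) \<and>
    (\<forall>x. n-3 \<le> x \<and> x \<le> n \<longrightarrow> n-3 \<le> p x \<and> p x \<le> n) \<and>
    (\<forall>x. 6 \<le> x \<and> x \<le> n-4 \<longrightarrow> p x = (if p 2 \<in> {3,4} then R1 x else x))"

lemma R1_T: "6 \<le> x \<Longrightarrow> x \<le> n-4 \<Longrightarrow> 6 \<le> R1 x \<and> R1 x \<le> n-4"
proof -
  obtain k where k: "n = 4*k+3" "2 \<le> k" by (rule n_form)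
  assume "6 \<le> x" "x \<le> n-4" then show ?thesis unfolding r1_def k(1) by (simp; presburger)
qed

lemma R2_T: "6 \<le> x \<Longrightarrow> x \<le> n-4 \<Longrightarrow> R2 x = x" unfolding r2_def by auto
lemma R3_T: "6 \<le> x \<Longrightarrow> x \<le> n-4 \<Longrightarrow> R3 x = x" unfolding r3_def by auto

lemma QQ_comp: assumes p: "QQ p" and q: "QQ q" shows "QQ (p \<circ> q)"
proof -
  have pT: "\<And>x. 6 \<le> x \<Longrightarrow> x \<le> n-4 \<Longrightarrow> p x = (if p 2 \<in> {3,4} then R1 x else x)"
   and qT: "\<And>x. 6 \<le> x \<Longrightarrow> x \<le> n-4 \<Longrightarrow> q x = (if q 2 \<in> {3,4} then R1 x else x)"
    using p q unfolding QQ_def by blast+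
  have pE: "\<And>x. n-3 \<le> x \<Longrightarrow> x \<le> n \<Longrightarrow> n-3 \<le> p x \<and> p x \<le> n"
   and qE: "\<And>x. n-3 \<le> x \<Longrightarrow> x \<le> n \<Longrightarrow> n-3 \<le> q x \<and> q x \<le> n"
    using p q unfolding QQ_def by blast+
  have pD: "(p 2 \<in> {2,5} \<and> p 5 \<in> {2,5} \<and> p 3 \<in> {3,4} \<and> p 4 \<in> {3,4}) \<or>
     (p 2 \<in> {3,4} \<and> p 5 \<in> {3,4} \<and> p 3 \<in> {2,5} \<and> p 4 \<in> {2,5})" using p unfolding QQ_def by blast
  have qD: "(q 2 \<in> {2,5} \<and> q 5 \<in> {2,5} \<and> q 3 \<in> {3,4} \<and> q 4 \<in> {3,4}) \<or>
     (q 2 \<in> {3,4} \<and> q 5 \<in> {3,4} \<and> q 3 \<in> {2,5} \<and> q 4 \<in> {2,5})" using q unfolding QQ_def by blast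
  have B: "((p (q 2) \<in> {2,5} \<and> p (q 5) \<in> {2,5} \<and> p (q 3) \<in> {3,4} \<and> p (q 4) \<in> {3,4}) \<or>
     (p (q 2) \<in> {3,4} \<and> p (q 5) \<in> {3,4} \<and> p (q 3) \<in> {2,5} \<and> p (q 4) \<in> {2,5})) \<and>
    ((p (q 2) \<in> {3,4}) = ((p 2 \<in> {3,4}) \<noteq> (q 2 \<in> {3,4})))" by (rule blocks[OF pD qD])
  have D: "((p\<circ>q) 2 \<in> {2,5} \<and> (p\<circ>q) 5 \<in> {2,5} \<and> (p\<circ>q) 3 \<in> {3,4} \<and> (p\<circ>q) 4 \<in> {3,4}) \<or>
     ((p\<circ>q) 2 \<in> {3,4} \<and> (p\<circ>q) 5 \<in> {3,4} \<and> (p\<circ>q) 3 \<in> {2,5} \<and> (p\<circ>q) 4 \<in> {2,5})"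
    using B unfolding comp_apply by (elim conjE)
  have x: "((p\<circ>q) 2 \<in> {3,4}) = ((p 2 \<in> {3,4}) \<noteq> (q 2 \<in> {3,4}))"
    using B unfolding comp_apply by (elim conjE)
  have T: "(p\<circ>q) x = (if (p\<circ>q) 2 \<in> {3,4} then R1 x else x)" if "6 \<le> x" "x \<le> n-4" for x
  proof -
    have qx: "6 \<le> q x" "q x \<le> n-4" using qT[OF that] R1_T[OF that] that by auto
    show ?thesis unfolding x using pT[OF qx] qT[OF that] R1_inv by auto
  qed
  have E: "n-3 \<le> (p\<circ>q) x \<and> (p\<circ>q) x \<le> n" if "n-3 \<le> x" "x \<le> n" for x
    using pE qE that by simp
  have one: "(p\<circ>q) 1 = 1" using p q unfolding QQ_def by simp
  show ?thesis unfolding QQ_def using one D E T by blast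
qed

lemma G123Q: "Gen {R1,R2,R3} \<subseteq> {p. QQ p}"
proof (rule gen_sub)
  show "{R1,R2,R3} \<subseteq> {R0,R1,R2,R3}" by blast
  show "id \<in> {p. QQ p}" unfolding QQ_def by auto
  show "p \<circ> q \<in> {p. QQ p}" if "p \<in> {p. QQ p}" "q \<in> {p. QQ p}" for p q using QQ_comp that by auto
  have E: "n-3 \<le> x \<and> x \<le> n \<longleftrightarrow> x = n-3 \<or> x = n-2 \<or> x = n-1 \<or> x = n" for x using n11 by auto
  have "QQ R1" unfolding QQ_def E using R1_vals by auto
  moreover have "QQ R2" unfolding QQ_def E using R2_vals R2_T by auto
  moreover have "QQ R3" unfolding QQ_def E using R3_vals R3_T by auto
  ultimately show "{R1,R2,R3} \<subseteq> {p. QQ p}" by auto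
qed

end

context L begin

definition vv :: "nat \<Rightarrow> nat" where
  "vv x = (if x=2 then 4 else if x=4 then 5 else if x=5 then 3 else if x=3 then 2
           else if 6 \<le> x \<and> x \<le> n-4 then R1 x else x)"

lemma regions: "x = 0 \<or> x = 1 \<or> x \<in> {2,3,4,5} \<or> (6 \<le> x \<and> x \<le> n-4) \<or> x \<in> {n-3,n-2,n-1,n} \<or> x > n"
proof -
  have "x \<le> 5 \<or> (6 \<le> x \<and> x \<le> n-4) \<or> (n-3 \<le> x \<and> x \<le> n) \<or> x > n" using n11 by linarith
  moreover have "x \<le> 5 \<Longrightarrow> x = 0 \<or> x = 1 \<or> x = 2 \<or> x = 3 \<or> x = 4 \<or> x = 5" by presburger
  moreover have "n-3 \<le> x \<Longrightarrow> x \<le> n \<Longrightarrow> x = n-3 \<or> x = n-2 \<or> x = n-1 \<or> x = n" by arith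
  ultimately show ?thesis by blast
qed

lemma regions2: "x \<notin> {1..n} \<or> x = 1 \<or> x = 2 \<or> x = 3 \<or> x = 4 \<or> x = 5 \<or> (6 \<le> x \<and> x \<le> n-4) \<or>
   x = n-3 \<or> x = n-2 \<or> x = n-1 \<or> x = n"
proof -
  have "x = 0 \<or> x = 1 \<or> x \<in> {2,3,4,5} \<or> (6 \<le> x \<and> x \<le> n-4) \<or> x \<in> {n-3,n-2,n-1,n} \<or> x > n"
    by (rule regions)
  moreover have "x = 0 \<Longrightarrow> x \<notin> {1..n}" "x > n \<Longrightarrow> x \<notin> {1..n}" by auto
  ultimately show ?thesis by blast
qed

lemma vv_word: "vv = R1 \<circ> R2 \<circ> R1 \<circ> R2 \<circ> R1 \<circ> R2"
proof
  fix x
  have o: "x \<notin> {1..n} \<Longrightarrow> R1 x = x \<and> R2 x = x" using permutes_not_in[OF R1_perm] permutes_not_in[OF R2_perm] by blast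
  have n6: "n - 3 \<noteq> 2" "n-3 \<noteq> 3" "n-3 \<noteq> 4" "n-3 \<noteq> 5" "n-2 \<noteq> 2" "n-2 \<noteq> 3" "n-2 \<noteq> 4" "n-2 \<noteq> 5"
     "n-1 \<noteq> 2" "n-1 \<noteq> 3" "n-1 \<noteq> 4" "n-1 \<noteq> 5" "n \<noteq> 2" "n \<noteq> 3" "n \<noteq> 4" "n \<noteq> 5"
     "\<not> (n-3 \<le> n-4)" "\<not> (n-2 \<le> n-4)" "\<not> (n-1 \<le> n-4)" "\<not> (n \<le> n-4)" using n11 by auto
  show "vv x = (R1 \<circ> R2 \<circ> R1 \<circ> R2 \<circ> R1 \<circ> R2) x"
  proof -
    consider "x = 0 \<or> x > n" | "x = 1" | "x = 2" | "x = 3" | "x = 4" | "x = 5" | "6 \<le> x \<and> x \<le> n-4"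
      | "x = n-3" | "x = n-2" | "x = n-1" | "x = n" using regions by blast
    then show ?thesis
    proof cases
      case 1 then have "x \<notin> {1..n}" by auto
      then show ?thesis using o 1 n11 unfolding vv_def by auto
    next
      case 7
      then have "R2 x = x" "6 \<le> R1 x \<and> R1 x \<le> n-4" "x \<noteq> 2" "x \<noteq> 3" "x \<noteq> 4" "x \<noteq> 5" using R2_T R1_T by auto
      then show ?thesis using 7 R2_T[of "R1 x"] R1_inv unfolding vv_def by simp
    qed (simp_all add: vv_def R1_vals[simplified] R2_vals[simplified] n6[simplified])
  qed
qed

lemma vv_Gen: "vv \<in> Gen {R1,R2}"
proof -
  have a: "R1 \<in> Gen {R1,R2}" "R2 \<in> Gen {R1,R2}" by (auto intro: gen_incl)
  show ?thesis unfolding vv_word by (intro gen_comp a)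
qed

lemma vv_vals: "vv 2 = 4" "vv 4 = 5" "vv 5 = 3" "vv 3 = 2" "vv (n-3) = n-3" "vv (n-2) = n-2" "vv (n-1) = n-1" "vv n = n"
  unfolding vv_def using n11 by auto

lemma G12_props: assumes "w \<in> Gen {R1,R2}"
  shows "QQ w" "w n = n" "evenperm w" "permutation w" "w permutes {1..n}"
proof -
  have "Gen {R1,R2} \<subseteq> Gen {R1,R2,R3}" by (rule gen_mono) blast
  then show "QQ w" using G123Q assms by blast
  have "Gen {R1,R2} \<subseteq> Gen {R0,R1,R2}" by (rule gen_mono) blast
  then show "w n = n" "evenperm w" "permutation w" using G012 assms by blast+
  show "w permutes {1..n}" using gen_perm[OF _ assms] by blast
qed

lemma QQ_E: assumes "QQ p" "n-3 \<le> x" "x \<le> n" shows "p x \<in> {n-3,n-2,n-1,n}"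
proof -
  have "n-3 \<le> p x \<and> p x \<le> n" using assms unfolding QQ_def by blast
  then have "p x = n-3 \<or> p x = n-2 \<or> p x = n-1 \<or> p x = n" by arith
  then show ?thesis by blast
qed

lemma step1: assumes g: "g permutes {1..n}" "QQ g" "g n = n"
  shows "\<exists>w \<in> Gen {R1,R2}. (w \<circ> g) (n-3) = n-3 \<and> (w \<circ> g) (n-2) = n-2 \<and> (w \<circ> g) (n-1) = n-1 \<and> (w \<circ> g) n = n"
proof -
  have inj: "inj g" using permutes_inj[OF g(1)] .
  have a1: "R1 \<in> Gen {R1,R2}" "R2 \<in> Gen {R1,R2}" by (auto intro: gen_incl)
  have "g (n-1) \<in> {n-3,n-2,n-1,n}" using QQ_E[OF g(2)] n11 by auto
  moreover have "g (n-1) \<noteq> g n" using inj n11 by (simp add: inj_eq)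
  ultimately have "g (n-1) \<in> {n-3,n-2,n-1}" using g(3) by auto
  then obtain w1 where w1: "w1 \<in> Gen {R1,R2}" "(w1 \<circ> g) (n-1) = n-1"
  proof (elim insertE emptyE)
    assume "g (n-1) = n-3" then show ?thesis using that[of "R2 \<circ> R1"] gen_comp[OF a1(2) a1(1)] R1_vals R2_vals by simp
  next
    assume "g (n-1) = n-2" then show ?thesis using that[of "R2"] a1 R2_vals by simp
  next
    assume "g (n-1) = n-1" then show ?thesis using that[of "id"] gen_id by simp
  qed
  define g1 where "g1 = w1 \<circ> g"
  have w1p: "QQ w1" "w1 n = n" "w1 permutes {1..n}" using G12_props[OF w1(1)] by auto
  have g1: "QQ g1" "g1 n = n" "g1 (n-1) = n-1" "g1 permutes {1..n}"
    using QQ_comp[OF w1p(1) g(2)] w1p g w1(2) permutes_compose[OF g(1) w1p(3)] unfolding g1_def by auto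
  have inj1: "inj g1" using permutes_inj[OF g1(4)] .
  have "g1 (n-2) \<in> {n-3,n-2,n-1,n}" using QQ_E[OF g1(1)] n11 by auto
  moreover have "g1 (n-2) \<noteq> g1 n" "g1 (n-2) \<noteq> g1 (n-1)" using inj1 n11 by (simp_all add: inj_eq)
  ultimately have "g1 (n-2) \<in> {n-3,n-2}" using g1 by auto
  then obtain w2 where w2: "w2 \<in> Gen {R1,R2}" "(w2 \<circ> g1) (n-2) = n-2" "(w2 \<circ> g1) (n-1) = n-1" "(w2 \<circ> g1) n = n"
  proof (elim insertE emptyE)
    assume "g1 (n-2) = n-3" then show ?thesis using that[of "R1"] a1 R1_vals g1 by simp
  next
    assume "g1 (n-2) = n-2" then show ?thesis using that[of "id"] gen_id g1 by simp
  qed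
  define g2 where "g2 = w2 \<circ> g1"
  have w2p: "QQ w2" "w2 permutes {1..n}" using G12_props[OF w2(1)] by auto
  have g2: "QQ g2" "g2 permutes {1..n}"
    using QQ_comp[OF w2p(1) g1(1)] permutes_compose[OF g1(4) w2p(2)] unfolding g2_def by auto
  have inj2: "inj g2" using permutes_inj[OF g2(2)] .
  have "g2 (n-3) \<in> {n-3,n-2,n-1,n}" using QQ_E[OF g2(1)] n11 by auto
  moreover have "g2 (n-3) \<noteq> g2 n" "g2 (n-3) \<noteq> g2 (n-1)" "g2 (n-3) \<noteq> g2 (n-2)" using inj2 n11 by (simp_all add: inj_eq)
  ultimately have "g2 (n-3) = n-3" using w2 unfolding g2_def by auto
  then show ?thesis using w2 gen_comp[OF w2(1) w1(1)] unfolding g2_def g1_def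
    by (intro bexI[of _ "w2 \<circ> w1"]) (auto simp: comp_assoc)
qed

lemma step2: assumes g: "g permutes {1..n}" "QQ g" and E: "g (n-3) = n-3" "g (n-2) = n-2" "g (n-1) = n-1" "g n = n"
  shows "\<exists>w \<in> Gen {R1,R2}. (w \<circ> g) 2 = 2 \<and> (w \<circ> g) (n-3) = n-3 \<and> (w \<circ> g) (n-2) = n-2 \<and> (w \<circ> g) (n-1) = n-1 \<and> (w \<circ> g) n = n"
proof -
  have "g 2 \<in> {2,3,4,5}" using g(2) unfolding QQ_def by auto
  have v2: "vv \<circ> vv \<in> Gen {R1,R2}" using gen_comp[OF vv_Gen vv_Gen] .
  have v3: "vv \<circ> vv \<circ> vv \<in> Gen {R1,R2}" using gen_comp[OF v2 vv_Gen] .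
  show ?thesis
  proof (cases "g 2 = 2")
    case True then show ?thesis using E gen_id by (intro bexI[of _ id]) auto
  next
    case F2: False
    show ?thesis
    proof (cases "g 2 = 3")
      case True then show ?thesis using E vv_Gen vv_vals by (intro bexI[of _ vv]) auto
    next
      case F3: False
      show ?thesis
      proof (cases "g 2 = 5")
        case True then show ?thesis using E v2 vv_vals by (intro bexI[of _ "vv \<circ> vv"]) auto
      next
        case False
        then have "g 2 = 4" using F2 F3 `g 2 \<in> {2,3,4,5}` by auto
        then show ?thesis using E v3 vv_vals by (intro bexI[of _ "vv \<circ> vv \<circ> vv"]) auto
      qed
    qed
  qed
qed

lemma fin: assumes g: "g permutes {1..n}" "QQ g" and E: "g (n-3) = n-3" "g (n-2) = n-2" "g (n-1) = n-1" "g n = n"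
  and g2: "g 2 = 2" shows "g = id \<or> g = Transposition.transpose 3 4"
proof -
  have inj: "inj g" using permutes_inj[OF g(1)] .
  have g1: "g 1 = 1" using g(2) unfolding QQ_def by simp
  have D: "g 5 \<in> {2,5}" "g 3 \<in> {3,4}" "g 4 \<in> {3,4}" using g(2) g2 unfolding QQ_def by auto
  have "g 5 \<noteq> g 2" "g 3 \<noteq> g 4" using inj by (simp_all add: inj_eq)
  then have g5: "g 5 = 5" and g34: "(g 3 = 3 \<and> g 4 = 4) \<or> (g 3 = 4 \<and> g 4 = 3)" using D g2 by auto
  have T: "6 \<le> x \<Longrightarrow> x \<le> n-4 \<Longrightarrow> g x = x" for x using g(2) g2 unfolding QQ_def by auto
  have o: "x \<notin> {1..n} \<Longrightarrow> g x = x" for x using permutes_not_in[OF g(1)] by blast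
  have ext: "g = q" if "q 1 = 1" "q 2 = 2" "q 5 = 5" "q 3 = g 3" "q 4 = g 4" "\<And>x. 6 \<le> x \<Longrightarrow> x \<le> n-4 \<Longrightarrow> q x = x"
    "q (n-3) = n-3" "q (n-2) = n-2" "q (n-1) = n-1" "q n = n" "\<And>x. x \<notin> {1..n} \<Longrightarrow> q x = x" for q
  proof
    fix x
    show "g x = q x" using regions2[of x] that g1 g2 g5 T o E by (elim disjE) auto
  qed
  have n6: "n - 3 \<noteq> 3" "n-3 \<noteq> 4" "n-2 \<noteq> 3" "n-2 \<noteq> 4" "n-1 \<noteq> 3" "n-1 \<noteq> 4" "n \<noteq> 3" "n \<noteq> 4"
    using n11 by auto
  from g34 show ?thesis
  proof
    assume a: "g 3 = 3 \<and> g 4 = 4"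
    have "g = id" by (rule ext) (use a in auto)
    then show ?thesis by simp
  next
    assume a: "g 3 = 4 \<and> g 4 = 3"
    have "g = Transposition.transpose 3 4" by (rule ext) (use a n6 n11 in \<open>auto simp: Transposition.transpose_def\<close>)
    then show ?thesis by simp
  qed
qed

lemma dkey: assumes g: "g permutes {1..n}" "QQ g" "g n = n" "evenperm g"
  shows "g \<in> Gen {R1,R2}"
proof -
  obtain w1 where w1: "w1 \<in> Gen {R1,R2}" "(w1 \<circ> g) (n-3) = n-3" "(w1 \<circ> g) (n-2) = n-2" "(w1 \<circ> g) (n-1) = n-1" "(w1 \<circ> g) n = n"
    using step1[OF g(1-3)] by blast
  have w1p: "QQ w1" "w1 permutes {1..n}" using G12_props[OF w1(1)] by auto
  have h1: "(w1 \<circ> g) permutes {1..n}" "QQ (w1 \<circ> g)" using permutes_compose[OF g(1) w1p(2)] QQ_comp[OF w1p(1) g(2)] by auto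
  obtain w2 where w2: "w2 \<in> Gen {R1,R2}" "(w2 \<circ> (w1 \<circ> g)) 2 = 2" "(w2 \<circ> (w1 \<circ> g)) (n-3) = n-3" "(w2 \<circ> (w1 \<circ> g)) (n-2) = n-2"
    "(w2 \<circ> (w1 \<circ> g)) (n-1) = n-1" "(w2 \<circ> (w1 \<circ> g)) n = n"
    using step2[OF h1 w1(2-5)] by blast
  have w2p: "QQ w2" "w2 permutes {1..n}" using G12_props[OF w2(1)] by auto
  define W where "W = w2 \<circ> w1"
  have W: "W \<in> Gen {R1,R2}" unfolding W_def by (rule gen_comp[OF w2(1) w1(1)])
  have h2: "(W \<circ> g) permutes {1..n}" "QQ (W \<circ> g)" using permutes_compose[OF h1(1) w2p(2)] QQ_comp[OF w2p(1) h1(2)]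
    unfolding W_def by (auto simp: comp_assoc)
  have c: "W \<circ> g = id \<or> W \<circ> g = Transposition.transpose 3 4"
    by (rule fin[OF h2]) (use w2 in \<open>auto simp: W_def\<close>)
  have ev: "evenperm (W \<circ> g)"
    using G12_props[OF W] g(4) permutes_imp_permutation[OF _ g(1)] by (simp add: evenperm_comp)
  have "W \<circ> g = id" using c ev evenperm_swap[of "3::nat" 4] by auto
  then have "W \<circ> g \<in> Gen {R1,R2}" using gen_id by simp
  moreover have "g \<in> carrier SG" using g(1) by (simp add: sym_group_carrier)
  ultimately show ?thesis using gen_cancel[OF _ W] by blast
qed

end

context L begin

lemmas V = R0_vals[simplified] R1_vals[simplified] R2_vals[simplified] R3_vals[simplified]

lemma Rin: "R0 \<in> {R0,R1,R2,R3}" "R1 \<in> {R0,R1,R2,R3}" "R2 \<in> {R0,R1,R2,R3}" "R3 \<in> {R0,R1,R2,R3}" by auto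

lemma gen_single: assumes r: "r \<in> {R0,R1,R2,R3}" shows "Gen {r} \<subseteq> {id, r}"
proof (rule gen_sub)
  show "{r} \<subseteq> {R0,R1,R2,R3}" using r by blast
  have rr: "r \<circ> r = id" using r R_comp_self by auto
  show "p \<circ> q \<in> {id, r}" if "p \<in> {id, r}" "q \<in> {id, r}" for p q using that rr by auto
qed auto

lemma gen_pair: assumes a: "a \<in> {R0,R1,R2,R3}" and b: "b \<in> {R0,R1,R2,R3}" and c: "b \<circ> a = a \<circ> b"
  shows "Gen {a,b} \<subseteq> {id, b, a, b \<circ> a}"
proof -
  have "Gen (insert a {b}) \<subseteq> Gen {b} \<union> (\<lambda>g. g \<circ> a) ` Gen {b}"
    by (rule gen_coset) (use a b c in auto)
  moreover have s: "Gen {b} \<subseteq> {id, b}" by (rule gen_single[OF b])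
  moreover have "x \<circ> a \<in> {a, b \<circ> a}" if "x \<in> Gen {b}" for x using s that by auto
  ultimately show ?thesis by blast
qed

lemma P02: "Gen {R0,R2} \<subseteq> {id, R2, R0, R2 \<circ> R0}" by (rule gen_pair) (use comm02 in auto)
lemma P03: "Gen {R0,R3} \<subseteq> {id, R3, R0, R3 \<circ> R0}" by (rule gen_pair) (use comm03 in auto)
lemma P13: "Gen {R1,R3} \<subseteq> {id, R3, R1, R3 \<circ> R1}" by (rule gen_pair) (use comm13 in auto)

lemma C013: "Gen {R0,R1,R3} \<subseteq> Gen {R0,R1} \<union> (\<lambda>g. g \<circ> R3) ` Gen {R0,R1}"
proof -
  have "{R0,R1,R3} = insert R3 {R0,R1}" by auto
  moreover have "Gen (insert R3 {R0,R1}) \<subseteq> Gen {R0,R1} \<union> (\<lambda>g. g \<circ> R3) ` Gen {R0,R1}"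
    by (rule gen_coset) (use comm03 comm13 in auto)
  ultimately show ?thesis by simp
qed

lemma C023: "Gen {R0,R2,R3} \<subseteq> Gen {R2,R3} \<union> (\<lambda>g. g \<circ> R0) ` Gen {R2,R3}"
  by (rule gen_coset) (use comm02 comm03 in auto)

lemma sub12: "Gen {R1,R2} \<subseteq> Gen {R0,R1,R2}" "Gen {R1,R2} \<subseteq> Gen {R1,R2,R3}"
  by (rule gen_mono, blast)+
lemma subs: "Gen {R0,R2} \<subseteq> Gen {R0,R1,R2}" "Gen {R0,R2} \<subseteq> Gen {R0,R2,R3}"
  "Gen {R0,R3} \<subseteq> Gen {R0,R2,R3}" "Gen {R1,R3} \<subseteq> Gen {R1,R2,R3}" "Gen {R2,R3} \<subseteq> Gen {R1,R2,R3}"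
  "Gen {R2,R3} \<subseteq> Gen {R0,R2,R3}" "Gen {R0,R1} \<subseteq> Gen {R0,R1,R3}"
  by (rule gen_mono, blast)+

lemma F012: "p \<in> Gen {R0,R1,R2} \<Longrightarrow> p n = n \<and> evenperm p \<and> permutation p" using G012 by blast
lemma F123: "p \<in> Gen {R1,R2,R3} \<Longrightarrow> p 1 = 1" using G123 by blast
lemma F023: "p \<in> Gen {R0,R2,R3} \<Longrightarrow> p 1 \<in> {1,2} \<and> p 2 \<in> {1,2}" using G023 by blast
lemma F013: "p \<in> Gen {R0,R1,R3} \<Longrightarrow> 1 \<le> x \<Longrightarrow> x \<le> n-2 \<Longrightarrow> p x \<le> n-2" using G013 by blast
lemma F01: "p \<in> Gen {R0,R1} \<Longrightarrow> p (n-1) = n-1 \<and> p n = n" using G01 by blast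
lemma F23: "p \<in> Gen {R2,R3} \<Longrightarrow> p 1 = 1 \<and> p 2 = 2"
proof -
  assume "p \<in> Gen {R2,R3}"
  then have "\<forall>x. x \<notin> {3,4,n-2,n-1,n} \<longrightarrow> p x = x" using G23 by blast
  moreover have "(1::nat) \<notin> {3,4,n-2,n-1,n}" "(2::nat) \<notin> {3,4,n-2,n-1,n}" using n11 by auto
  ultimately show ?thesis by blast
qed

lemma T34_odd: "\<not> evenperm T34" by (simp add: evenperm_swap)
lemma TN_odd: "\<not> evenperm TN" using n11 by (simp add: evenperm_swap)

lemma T34_not01: "T34 \<notin> Gen {R0,R1}"
proof
  assume a: "T34 \<in> Gen {R0,R1}"
  have "T34 1 = 1" by (simp add: Transposition.transpose_def)
  then have "T34 = id \<or> T34 = R1" using L01[OF a] by blast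
  moreover have "T34 3 \<noteq> id 3" by (simp add: Transposition.transpose_def)
  moreover have "T34 2 \<noteq> R1 2" using V by (simp add: Transposition.transpose_def)
  ultimately show False by metis
qed

lemma c5: assumes "g \<in> Gen {R0,R1}" "g \<in> Gen {R2,R3}" shows "g = id"
proof -
  have f: "g (n-1) = n-1" "g n = n" using F01[OF assms(1)] by auto
  have "g = id \<or> g = T34 \<or> g = TN \<or> g = R2" using L23[OF assms(2) f(2)] .
  moreover have "TN (n-1) \<noteq> n-1" "R2 (n-1) \<noteq> n-1" using n11 V by (auto simp: Transposition.transpose_def)
  ultimately show ?thesis using f T34_not01 assms(1) by auto
qed

end

context L begin

lemma coset_cases: assumes "g \<in> A \<union> (\<lambda>x. x \<circ> s) ` B" obtains "g \<in> A" | h where "h \<in> B" "g = h \<circ> s"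
  using assms by blast

lemma undo: assumes "g = h \<circ> s" "s \<circ> s = id" shows "h = g \<circ> s"
  using assms by (simp add: comp_assoc)

lemma mem: "id \<in> Gen S" "R0 \<in> S \<Longrightarrow> R0 \<in> Gen S" "R1 \<in> S \<Longrightarrow> R1 \<in> Gen S" "R2 \<in> S \<Longrightarrow> R2 \<in> Gen S"
  "R3 \<in> S \<Longrightarrow> R3 \<in> Gen S" by (auto intro: gen_id gen_incl)

lemma k1: "g \<in> Gen {R0} \<Longrightarrow> g \<in> Gen {R1,R2,R3} \<Longrightarrow> g \<in> Gen {}"
  using gen_single[OF Rin(1)] F123[of g] R0_vals(1) gen_id by auto
lemma k2: "g \<in> Gen {R3} \<Longrightarrow> g \<in> Gen {R0,R1,R2} \<Longrightarrow> g \<in> Gen {}"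
  using gen_single[OF Rin(4)] F012[of g] R3_vals(9) n11 gen_id by auto
lemma k3: "g \<in> Gen {R1} \<Longrightarrow> g \<in> Gen {R0,R2,R3} \<Longrightarrow> g \<in> Gen {}"
  using gen_single[OF Rin(2)] F023[of g] R1_vals(2) gen_id by auto
lemma k4: assumes "g \<in> Gen {R2}" "g \<in> Gen {R0,R1,R3}" shows "g \<in> Gen {}"
proof -
  have a: "g (n-2) \<le> n-2" using F013[OF assms(2), of "n-2"] n11 by simp
  have "g = id \<or> g = R2" using gen_single[OF Rin(3)] assms(1) by blast
  then show ?thesis using a R2_vals(7) n11 gen_id by auto
qed
lemma k5: "g \<in> Gen {R0,R1} \<Longrightarrow> g \<in> Gen {R2,R3} \<Longrightarrow> g \<in> Gen {}"
  using c5 gen_id by blast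
lemma k6: assumes "g \<in> Gen {R0,R2}" "g \<in> Gen {R1,R3}" shows "g \<in> Gen {}"
proof -
  have "g n = n" "g 2 \<in> {1,2}" using F012[of g] F023[of g] subs assms(1) by blast+
  then show ?thesis using P13 assms(2) R3_vals(9) R1_vals(2) R1_vals(9) n11 gen_id by auto
qed
lemma k7: assumes "g \<in> Gen {R0,R3}" "g \<in> Gen {R1,R2}" shows "g \<in> Gen {}"
proof -
  have "g n = n" "g 1 = 1" using F012[of g] F123[of g] sub12 assms(2) by blast+
  then show ?thesis using P03 assms(1) R3_vals(9) R0_vals(1) R0_vals(7) n11 gen_id by auto
qed
lemma k8: assumes "g \<in> Gen {R0,R3}" "g \<in> Gen {R0,R1,R2}" shows "g \<in> Gen {R0}"
proof -
  have "g n = n" using F012[of g] assms(2) by blast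
  then show ?thesis using P03 assms(1) R3_vals(9) R0_vals(7) n11 mem(1) mem(2)[of "{R0}", simplified] by auto
qed
lemma k9: assumes "g \<in> Gen {R0,R2}" "g \<in> Gen {R0,R1,R3}" shows "g \<in> Gen {R0}"
proof -
  have "g (n-2) \<le> n-2" using F013[of g "n-2"] assms(2) n11 by auto
  then show ?thesis using P02 assms(1) R2_vals(7) R0_vals(5) n11 mem(1) mem(2)[of "{R0}", simplified] by auto
qed
lemma k10: assumes "g \<in> Gen {R0,R1}" "g \<in> Gen {R0,R2,R3}" shows "g \<in> Gen {R0}"
  using C023 assms(2)
proof (elim subsetD[THEN coset_cases])
  assume "g \<in> Gen {R2,R3}" then show ?thesis using c5 assms(1) mem(1) by auto
next
  fix h assume h: "h \<in> Gen {R2,R3}" "g = h \<circ> R0"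
  have "h = g \<circ> R0" using undo[OF h(2)] R_comp_self by simp
  then have "h \<in> Gen {R0,R1}" using gen_comp[OF assms(1) gen_incl[of R0 "{R0,R1}"]] by simp
  then have "h = id" using c5 h(1) by blast
  then show ?thesis using h(2) mem(2)[of "{R0}", simplified] by simp
qed
lemma k11: assumes "g \<in> Gen {R1,R3}" "g \<in> Gen {R0,R1,R2}" shows "g \<in> Gen {R1}"
proof -
  have "g n = n" using F012[of g] assms(2) by blast
  then show ?thesis using P13 assms(1) R3_vals(9) R1_vals(9) n11 mem(1) mem(3)[of "{R1}", simplified] by auto
qed
lemma k13: assumes "g \<in> Gen {R0,R1}" "g \<in> Gen {R1,R2,R3}" shows "g \<in> Gen {R1}"
  using L01[OF assms(1) F123[OF assms(2)]] mem(1) mem(3)[of "{R1}", simplified] by auto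
lemma k12: assumes "g \<in> Gen {R1,R2}" "g \<in> Gen {R0,R1,R3}" shows "g \<in> Gen {R1}"
  using C013 assms(2)
proof (elim subsetD[THEN coset_cases])
  assume a: "g \<in> Gen {R0,R1}"
  have "g 1 = 1" using F123[of g] sub12 assms(1) by blast
  then show ?thesis using L01[OF a] mem(1) mem(3)[of "{R1}", simplified] by auto
next
  fix h assume h: "h \<in> Gen {R0,R1}" "g = h \<circ> R3"
  have "g n = n" using F012[of g] sub12 assms(1) by blast
  moreover have "g n = n-1" using h F01[OF h(1)] R3_vals(9) by simp
  ultimately show ?thesis using n11 by simp
qed
lemma k14: assumes "g \<in> Gen {R2,R3}" "g \<in> Gen {R0,R1,R2}" shows "g \<in> Gen {R2}"
proof -
  have "g n = n" "evenperm g" using F012[OF assms(2)] by auto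
  then show ?thesis using L23[OF assms(1)] T34_odd TN_odd mem(1) mem(4)[of "{R2}", simplified] by auto
qed
lemma k15: assumes "g \<in> Gen {R0,R2}" "g \<in> Gen {R1,R2,R3}" shows "g \<in> Gen {R2}"
proof -
  have "g 1 = 1" using F123[OF assms(2)] .
  then show ?thesis using P02 assms(1) R0_vals(1) R2_vals(2) mem(1) mem(4)[of "{R2}", simplified] by auto
qed
lemma k16: assumes "g \<in> Gen {R1,R2}" "g \<in> Gen {R0,R2,R3}" shows "g \<in> Gen {R2}"
  using C023 assms(2)
proof (elim subsetD[THEN coset_cases])
  assume a: "g \<in> Gen {R2,R3}"
  have "g n = n" "evenperm g" using F012[of g] sub12 assms(1) by blast+
  then show ?thesis using L23[OF a] T34_odd TN_odd mem(1) mem(4)[of "{R2}", simplified] by auto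
next
  fix h assume h: "h \<in> Gen {R2,R3}" "g = h \<circ> R0"
  have "g 1 = 1" using F123[of g] sub12 assms(1) by blast
  moreover have "g 1 = 2" using h F23[OF h(1)] R0_vals(1) by simp
  ultimately show ?thesis by simp
qed
lemma k17: assumes "g \<in> Gen {R0,R3}" "g \<in> Gen {R1,R2,R3}" shows "g \<in> Gen {R3}"
proof -
  have "g 1 = 1" using F123[OF assms(2)] .
  then show ?thesis using P03 assms(1) R0_vals(1) R3_vals(2) mem(1) mem(5)[of "{R3}", simplified] by auto
qed
lemma k18: assumes "g \<in> Gen {R1,R3}" "g \<in> Gen {R0,R2,R3}" shows "g \<in> Gen {R3}"
proof -
  have "g 2 \<in> {1,2}" using F023[OF assms(2)] by blast
  then show ?thesis using P13 assms(1) R1_vals(2) R3_vals(3) mem(1) mem(5)[of "{R3}", simplified] by auto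
qed
lemma k19: assumes "g \<in> Gen {R2,R3}" "g \<in> Gen {R0,R1,R3}" shows "g \<in> Gen {R3}"
  using C013 assms(2)
proof (elim subsetD[THEN coset_cases])
  assume "g \<in> Gen {R0,R1}" then show ?thesis using c5 assms(1) mem(1) by auto
next
  fix h assume h: "h \<in> Gen {R0,R1}" "g = h \<circ> R3"
  have "h = g \<circ> R3" using undo[OF h(2)] R_comp_self by simp
  then have "h \<in> Gen {R2,R3}" using gen_comp[OF assms(1) gen_incl[of R3 "{R2,R3}"]] by simp
  then have "h = id" using c5 h(1) by blast
  then show ?thesis using h(2) mem(5)[of "{R3}", simplified] by simp
qed
lemma k20: assumes "g \<in> Gen {R0,R1,R2}" "g \<in> Gen {R0,R1,R3}" shows "g \<in> Gen {R0,R1}"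
  using C013 assms(2)
proof (elim subsetD[THEN coset_cases])
  fix h assume h: "h \<in> Gen {R0,R1}" "g = h \<circ> R3"
  have "g n = n" using F012[OF assms(1)] by blast
  moreover have "g n = n-1" using h F01[OF h(1)] R3_vals(9) by simp
  ultimately show ?thesis using n11 by simp
qed
lemma k21: assumes "g \<in> Gen {R0,R1,R2}" "g \<in> Gen {R0,R2,R3}" shows "g \<in> Gen {R0,R2}"
  using C023 assms(2)
proof (elim subsetD[THEN coset_cases])
  assume a: "g \<in> Gen {R2,R3}"
  have "g n = n" "evenperm g" using F012[OF assms(1)] by auto
  then show ?thesis using L23[OF a] T34_odd TN_odd mem(1) mem(4)[of "{R0,R2}", simplified] by auto
next
  fix h assume h: "h \<in> Gen {R2,R3}" "g = h \<circ> R0"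
  have hg: "h = g \<circ> R0" using undo[OF h(2)] R_comp_self by simp
  have g: "g n = n" "evenperm g" "permutation g" using F012[OF assms(1)] by auto
  have "h n = n" using hg g R0_vals(7) by simp
  moreover have "evenperm h" using hg g R0_even R_perm' by (simp add: evenperm_comp)
  ultimately have "h = id \<or> h = R2" using L23[OF h(1)] T34_odd TN_odd by auto
  moreover have "R2 \<circ> R0 \<in> Gen {R0,R2}" by (rule gen_comp) (simp_all add: gen_incl)
  ultimately show ?thesis using h(2) mem(2)[of "{R0,R2}", simplified] by auto
qed
lemma k22: assumes "g \<in> Gen {R0,R1,R3}" "g \<in> Gen {R0,R2,R3}" shows "g \<in> Gen {R0,R3}"
  using C013 assms(1)
proof (elim subsetD[THEN coset_cases])
  assume a: "g \<in> Gen {R0,R1}"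
  have "g \<in> Gen {R0}" using k10[OF a assms(2)] .
  then show ?thesis using gen_mono[of "{R0}" "{R0,R3}"] by blast
next
  fix h assume h: "h \<in> Gen {R0,R1}" "g = h \<circ> R3"
  have "h = g \<circ> R3" using undo[OF h(2)] R_comp_self by simp
  then have "h \<in> Gen {R0,R2,R3}" using gen_comp[OF assms(2) gen_incl[of R3 "{R0,R2,R3}"]] by simp
  then have "h \<in> Gen {R0}" using k10[OF h(1)] by blast
  then have "h = id \<or> h = R0" using gen_single[OF Rin(1)] by blast
  moreover have "R0 \<circ> R3 \<in> Gen {R0,R3}" by (rule gen_comp) (simp_all add: gen_incl)
  ultimately show ?thesis using h(2) mem(5)[of "{R0,R3}", simplified] by auto
qed
lemma k23: assumes "g \<in> Gen {R0,R1,R2}" "g \<in> Gen {R1,R2,R3}" shows "g \<in> Gen {R1,R2}"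
proof (rule dkey)
  show "g permutes {1..n}" using gen_perm[OF _ assms(1)] by blast
  show "QQ g" using G123Q assms(2) by blast
  show "g n = n" "evenperm g" using F012[OF assms(1)] by auto
qed
lemma k24: assumes "g \<in> Gen {R0,R1,R3}" "g \<in> Gen {R1,R2,R3}" shows "g \<in> Gen {R1,R3}"
  using C013 assms(1)
proof (elim subsetD[THEN coset_cases])
  assume a: "g \<in> Gen {R0,R1}"
  have "g = id \<or> g = R1" using L01[OF a F123[OF assms(2)]] .
  then show ?thesis using mem(1) mem(3)[of "{R1,R3}", simplified] by auto
next
  fix h assume h: "h \<in> Gen {R0,R1}" "g = h \<circ> R3"
  have "h = g \<circ> R3" using undo[OF h(2)] R_comp_self by simp
  then have "h \<in> Gen {R1,R2,R3}" using gen_comp[OF assms(2) gen_incl[of R3 "{R1,R2,R3}"]] by simp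
  then have "h = id \<or> h = R1" using L01[OF h(1)] F123 by blast
  moreover have "R1 \<circ> R3 \<in> Gen {R1,R3}" by (rule gen_comp) (simp_all add: gen_incl)
  ultimately show ?thesis using h(2) mem(5)[of "{R1,R3}", simplified] by auto
qed
lemma k25: assumes "g \<in> Gen {R0,R2,R3}" "g \<in> Gen {R1,R2,R3}" shows "g \<in> Gen {R2,R3}"
  using C023 assms(1)
proof (elim subsetD[THEN coset_cases])
  fix h assume h: "h \<in> Gen {R2,R3}" "g = h \<circ> R0"
  have "g 1 = 1" using F123[OF assms(2)] .
  moreover have "g 1 = 2" using h F23[OF h(1)] R0_vals(1) by simp
  ultimately show ?thesis by simp
qed

end

context L begin

lemma s1: "Gen {R0} \<inter> Gen {R1,R2,R3} \<subseteq> Gen {}" using k1 by blast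
lemma t1: "Gen {R1,R2,R3} \<inter> Gen {R0} \<subseteq> Gen {}" using k1 by blast
lemma s2: "Gen {R3} \<inter> Gen {R0,R1,R2} \<subseteq> Gen {}" using k2 by blast
lemma t2: "Gen {R0,R1,R2} \<inter> Gen {R3} \<subseteq> Gen {}" using k2 by blast
lemma s3: "Gen {R1} \<inter> Gen {R0,R2,R3} \<subseteq> Gen {}" using k3 by blast
lemma t3: "Gen {R0,R2,R3} \<inter> Gen {R1} \<subseteq> Gen {}" using k3 by blast
lemma s4: "Gen {R2} \<inter> Gen {R0,R1,R3} \<subseteq> Gen {}" using k4 by blast
lemma t4: "Gen {R0,R1,R3} \<inter> Gen {R2} \<subseteq> Gen {}" using k4 by blast
lemma s5: "Gen {R0,R1} \<inter> Gen {R2,R3} \<subseteq> Gen {}" using k5 by blast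
lemma t5: "Gen {R2,R3} \<inter> Gen {R0,R1} \<subseteq> Gen {}" using k5 by blast
lemma s6: "Gen {R0,R2} \<inter> Gen {R1,R3} \<subseteq> Gen {}" using k6 by blast
lemma t6: "Gen {R1,R3} \<inter> Gen {R0,R2} \<subseteq> Gen {}" using k6 by blast
lemma s7: "Gen {R0,R3} \<inter> Gen {R1,R2} \<subseteq> Gen {}" using k7 by blast
lemma t7: "Gen {R1,R2} \<inter> Gen {R0,R3} \<subseteq> Gen {}" using k7 by blast
lemma s8: "Gen {R0,R3} \<inter> Gen {R0,R1,R2} \<subseteq> Gen {R0}" using k8 by blast
lemma t8: "Gen {R0,R1,R2} \<inter> Gen {R0,R3} \<subseteq> Gen {R0}" using k8 by blast
lemma s9: "Gen {R0,R2} \<inter> Gen {R0,R1,R3} \<subseteq> Gen {R0}" using k9 by blast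
lemma t9: "Gen {R0,R1,R3} \<inter> Gen {R0,R2} \<subseteq> Gen {R0}" using k9 by blast
lemma s10: "Gen {R0,R1} \<inter> Gen {R0,R2,R3} \<subseteq> Gen {R0}" using k10 by blast
lemma t10: "Gen {R0,R2,R3} \<inter> Gen {R0,R1} \<subseteq> Gen {R0}" using k10 by blast
lemma s11: "Gen {R1,R3} \<inter> Gen {R0,R1,R2} \<subseteq> Gen {R1}" using k11 by blast
lemma t11: "Gen {R0,R1,R2} \<inter> Gen {R1,R3} \<subseteq> Gen {R1}" using k11 by blast
lemma s12: "Gen {R1,R2} \<inter> Gen {R0,R1,R3} \<subseteq> Gen {R1}" using k12 by blast
lemma t12: "Gen {R0,R1,R3} \<inter> Gen {R1,R2} \<subseteq> Gen {R1}" using k12 by blast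
lemma s13: "Gen {R0,R1} \<inter> Gen {R1,R2,R3} \<subseteq> Gen {R1}" using k13 by blast
lemma t13: "Gen {R1,R2,R3} \<inter> Gen {R0,R1} \<subseteq> Gen {R1}" using k13 by blast
lemma s14: "Gen {R2,R3} \<inter> Gen {R0,R1,R2} \<subseteq> Gen {R2}" using k14 by blast
lemma t14: "Gen {R0,R1,R2} \<inter> Gen {R2,R3} \<subseteq> Gen {R2}" using k14 by blast
lemma s15: "Gen {R0,R2} \<inter> Gen {R1,R2,R3} \<subseteq> Gen {R2}" using k15 by blast
lemma t15: "Gen {R1,R2,R3} \<inter> Gen {R0,R2} \<subseteq> Gen {R2}" using k15 by blast
lemma s16: "Gen {R1,R2} \<inter> Gen {R0,R2,R3} \<subseteq> Gen {R2}" using k16 by blast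
lemma t16: "Gen {R0,R2,R3} \<inter> Gen {R1,R2} \<subseteq> Gen {R2}" using k16 by blast
lemma s17: "Gen {R0,R3} \<inter> Gen {R1,R2,R3} \<subseteq> Gen {R3}" using k17 by blast
lemma t17: "Gen {R1,R2,R3} \<inter> Gen {R0,R3} \<subseteq> Gen {R3}" using k17 by blast
lemma s18: "Gen {R1,R3} \<inter> Gen {R0,R2,R3} \<subseteq> Gen {R3}" using k18 by blast
lemma t18: "Gen {R0,R2,R3} \<inter> Gen {R1,R3} \<subseteq> Gen {R3}" using k18 by blast
lemma s19: "Gen {R2,R3} \<inter> Gen {R0,R1,R3} \<subseteq> Gen {R3}" using k19 by blast
lemma t19: "Gen {R0,R1,R3} \<inter> Gen {R2,R3} \<subseteq> Gen {R3}" using k19 by blast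
lemma s20: "Gen {R0,R1,R2} \<inter> Gen {R0,R1,R3} \<subseteq> Gen {R0,R1}" using k20 by blast
lemma t20: "Gen {R0,R1,R3} \<inter> Gen {R0,R1,R2} \<subseteq> Gen {R0,R1}" using k20 by blast
lemma s21: "Gen {R0,R1,R2} \<inter> Gen {R0,R2,R3} \<subseteq> Gen {R0,R2}" using k21 by blast
lemma t21: "Gen {R0,R2,R3} \<inter> Gen {R0,R1,R2} \<subseteq> Gen {R0,R2}" using k21 by blast
lemma s22: "Gen {R0,R1,R3} \<inter> Gen {R0,R2,R3} \<subseteq> Gen {R0,R3}" using k22 by blast
lemma t22: "Gen {R0,R2,R3} \<inter> Gen {R0,R1,R3} \<subseteq> Gen {R0,R3}" using k22 by blast
lemma s23: "Gen {R0,R1,R2} \<inter> Gen {R1,R2,R3} \<subseteq> Gen {R1,R2}" using k23 by blast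
lemma t23: "Gen {R1,R2,R3} \<inter> Gen {R0,R1,R2} \<subseteq> Gen {R1,R2}" using k23 by blast
lemma s24: "Gen {R0,R1,R3} \<inter> Gen {R1,R2,R3} \<subseteq> Gen {R1,R3}" using k24 by blast
lemma t24: "Gen {R1,R2,R3} \<inter> Gen {R0,R1,R3} \<subseteq> Gen {R1,R3}" using k24 by blast
lemma s25: "Gen {R0,R2,R3} \<inter> Gen {R1,R2,R3} \<subseteq> Gen {R2,R3}" using k25 by blast
lemma t25: "Gen {R1,R2,R3} \<inter> Gen {R0,R2,R3} \<subseteq> Gen {R2,R3}" using k25 by blast

lemmas ks = s1 t1 s2 t2 s3 t3 s4 t4 s5 t5 s6 t6 s7 t7 s8 t8 s9 t9 s10 t10 s11 t11 s12 t12 s13 t13 s14 t14 s15 t15 s16 t16 s17 t17 s18 t18 s19 t19 s20 t20 s21 t21 s22 t22 s23 t23 s24 t24 s25 t25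

lemma step_r: assumes "1 \<le> k" "k \<le> n-2" shows "\<exists>r \<in> {R0,R1,R2}. r (k+1) = k \<and> r n = n"
proof -
  obtain m where m: "n = 4*m+3" "2 \<le> m" by (rule n_form)
  show ?thesis
  proof (cases "k = n-2")
    case True
    have "Suc (n-2) = n-1" using n11 by arith
    then show ?thesis using R2_vals True by (intro bexI[of _ R2]) auto
  next
    case False
    show ?thesis
    proof (cases "odd k")
      case True
      then have "R0 (k+1) = k" using assms False unfolding r0_def m(1) by presburger
      then show ?thesis using R0_vals by (intro bexI[of _ R0]) auto
    next
      case ev: False
      then have "R1 (k+1) = k" using assms False unfolding r1_def m(1) by presburger
      then show ?thesis using R1_vals by (intro bexI[of _ R1]) auto
    qed
  qed
qed

lemma star: assumes "1 \<le> k" "k \<le> n-1" shows "Transposition.transpose k n \<in> Gen {R0,R1,R2,R3}"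
  using assms(2)
proof (induction k rule: inc_induct)
  case base
  show ?case using R3_t gen_incl[of R3 "{R0,R1,R2,R3}"] by simp
next
  case (step m)
  have m: "1 \<le> m" "m \<le> n-2" using step.hyps assms(1) by auto
  obtain r where r: "r \<in> {R0,R1,R2}" "r (m+1) = m" "r n = n" using step_r[OF m] by blast
  have rinv: "\<And>x. r (r x) = x" using r(1) R0_inv R1_inv R2_inv by auto
  have "r \<circ> Transposition.transpose (Suc m) n \<circ> r = Transposition.transpose (r (Suc m)) (r n)"
    by (rule transpose_conj[OF rinv])
  then have eq: "Transposition.transpose m n = r \<circ> Transposition.transpose (Suc m) n \<circ> r" using r by simp
  have rg: "r \<in> Gen {R0,R1,R2,R3}" using r(1) by (auto intro: gen_incl)
  show ?case unfolding eq by (intro gen_comp rg step.IH)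
qed

lemma all_transp: assumes "a \<in> {1..n}" "b \<in> {1..n}" shows "Transposition.transpose a b \<in> Gen {R0,R1,R2,R3}"
proof -
  consider "a = b" | "b = n" "a \<noteq> b" | "a = n" "a \<noteq> b" | "a \<noteq> n" "b \<noteq> n" "a \<noteq> b" by blast
  then show ?thesis
  proof cases
    case 1 then show ?thesis using gen_id by simp
  next
    case 2 then show ?thesis using star[of a] assms by auto
  next
    case 3 then show ?thesis using star[of b] assms by (auto simp: transpose_commute)
  next
    case 4
    have "Transposition.transpose a b = Transposition.transpose a n \<circ> Transposition.transpose b n \<circ> Transposition.transpose a n"
      using 4 by (auto simp: fun_eq_iff Transposition.transpose_def)
    moreover have "Transposition.transpose a n \<in> Gen {R0,R1,R2,R3}" "Transposition.transpose b n \<in> Gen {R0,R1,R2,R3}"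
      using star[of a] star[of b] assms 4 by auto
    ultimately show ?thesis by (simp add: gen_comp)
  qed
qed

lemma gen_all: "Gen {R0,R1,R2,R3} = carrier SG"
proof
  show "Gen {R0,R1,R2,R3} \<subseteq> carrier SG" by (rule gen_carr) simp
  show "carrier SG \<subseteq> Gen {R0,R1,R2,R3}"
  proof
    fix p assume "p \<in> carrier SG"
    then have "p permutes {1..n}" by (simp add: sym_group_carrier)
    from this finite_atLeastAtMost[of 1 n] show "p \<in> Gen {R0,R1,R2,R3}"
    proof (induction rule: permutes_induct)
      case id then show ?case by (rule gen_id)
    next
      case (swap a b p) then show ?case using all_transp gen_comp by blast
    qed
  qed
qed

lemma rho_img: "rho n ` {..<4} = {R0,R1,R2,R3}"
proof -
  have "{..<4::nat} = {0,1,2,3}" by auto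
  moreover have r: "rho n 0 = R0" "rho n 1 = R1" "rho n 2 = R2" "rho n 3 = R3" using rho0 rho1 rho2 rho3 n11 n4 by auto
  ultimately show ?thesis using r[simplified] by simp
qed

end

context L begin

lemma r_eqs: "rho n 0 = R0" "rho n 1 = R1" "rho n 2 = R2" "rho n 3 = R3"
  using rho0 rho1 rho2 rho3 n11 n4 by auto

lemma sq: "a \<circ> b = b \<circ> a \<Longrightarrow> a \<circ> a = id \<Longrightarrow> b \<circ> b = id \<Longrightarrow> (a \<circ> b) \<circ> (a \<circ> b) = id"
  by (metis comp_assoc comp_id)

lemma sggi_ok: "sggi SG 4 (rho n)"
proof -
  have i4: "\<And>i::nat. i < 4 \<Longrightarrow> i = 0 \<or> i = 1 \<or> i = 2 \<or> i = 3" by arith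
  have ne: "R0 \<noteq> id" "R1 \<noteq> id" "R2 \<noteq> id" "R3 \<noteq> id"
  proof -
    show "R0 \<noteq> id" using R0_vals(1) by (metis id_apply numeral_eq_one_iff semiring_norm(85))
    show "R1 \<noteq> id" using R1_vals(2) by (metis id_apply numeral_eq_iff semiring_norm(88) semiring_norm(89))
    show "R2 \<noteq> id" using R2_vals(3) by (metis id_apply numeral_eq_iff semiring_norm(88) semiring_norm(89))
    show "R3 \<noteq> id"
    proof
      assume "R3 = id" then have "R3 n = n" by simp
      then show False using R3_vals(9) n11 by simp
    qed
  qed
  have A: "\<forall>i<4. rho n i \<in> carrier SG \<and> rho n i \<noteq> \<one>\<^bsub>SG\<^esub> \<and> rho n i \<otimes>\<^bsub>SG\<^esub> rho n i = \<one>\<^bsub>SG\<^esub>"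
  proof (intro allI impI)
    fix i :: nat assume "i < 4"
    then have "i = 0 \<or> i = 1 \<or> i = 2 \<or> i = 3" by (rule i4)
    then show "rho n i \<in> carrier SG \<and> rho n i \<noteq> \<one>\<^bsub>SG\<^esub> \<and> rho n i \<otimes>\<^bsub>SG\<^esub> rho n i = \<one>\<^bsub>SG\<^esub>"
      unfolding sym_group_one sym_group_mult using r_eqs R_carr ne R_comp_self by auto
  qed
  have s: "(R0 \<circ> R2) \<circ> (R0 \<circ> R2) = id" "(R2 \<circ> R0) \<circ> (R2 \<circ> R0) = id"
     "(R0 \<circ> R3) \<circ> (R0 \<circ> R3) = id" "(R3 \<circ> R0) \<circ> (R3 \<circ> R0) = id"
     "(R1 \<circ> R3) \<circ> (R1 \<circ> R3) = id" "(R3 \<circ> R1) \<circ> (R3 \<circ> R1) = id"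
    using sq comm02 comm03 comm13 R_comp_self by metis+
  have B: "\<forall>i<4. \<forall>j<4. 2 \<le> \<bar>int i - int j\<bar> \<longrightarrow>
        (rho n i \<otimes>\<^bsub>SG\<^esub> rho n j) \<otimes>\<^bsub>SG\<^esub> (rho n i \<otimes>\<^bsub>SG\<^esub> rho n j) = \<one>\<^bsub>SG\<^esub>"
  proof (intro allI impI)
    fix i j :: nat assume "i < 4" "j < 4" and d: "2 \<le> \<bar>int i - int j\<bar>"
    then have "i = 0 \<or> i = 1 \<or> i = 2 \<or> i = 3" "j = 0 \<or> j = 1 \<or> j = 2 \<or> j = 3" using i4 by auto
    then show "(rho n i \<otimes>\<^bsub>SG\<^esub> rho n j) \<otimes>\<^bsub>SG\<^esub> (rho n i \<otimes>\<^bsub>SG\<^esub> rho n j) = \<one>\<^bsub>SG\<^esub>"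
      unfolding sym_group_one sym_group_mult using d r_eqs s by (elim disjE) simp_all
  qed
  show ?thesis unfolding sggi_def using A B by blast
qed

definition RR :: "bool \<Rightarrow> bool \<Rightarrow> bool \<Rightarrow> bool \<Rightarrow> (nat \<Rightarrow> nat) set" where
  "RR a0 a1 a2 a3 = (if a0 then insert R0 else (\<lambda>X. X)) ((if a1 then insert R1 else (\<lambda>X. X))
      ((if a2 then insert R2 else (\<lambda>X. X)) (if a3 then {R3} else {})))"

lemma mainb: "(a0 \<or> b0) \<Longrightarrow> (a1 \<or> b1) \<Longrightarrow> (a2 \<or> b2) \<Longrightarrow> (a3 \<or> b3) \<Longrightarrow>
  Gen (RR a0 a1 a2 a3) \<inter> Gen (RR b0 b1 b2 b3) \<subseteq> Gen (RR (a0 \<and> b0) (a1 \<and> b1) (a2 \<and> b2) (a3 \<and> b3))"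
  by (cases a0; cases a1; cases a2; cases a3; cases b0; cases b1; cases b2; cases b3)
     (simp_all add: RR_def ks Int_lower1 Int_lower2)

lemma img: assumes "J \<subseteq> {0,1,2,3}" shows "rho n ` J = RR (0 \<in> J) (1 \<in> J) (2 \<in> J) (3 \<in> J)"
proof
  show "rho n ` J \<subseteq> RR (0 \<in> J) (1 \<in> J) (2 \<in> J) (3 \<in> J)"
  proof
    fix y assume "y \<in> rho n ` J"
    then obtain x where x: "x \<in> J" "y = rho n x" by blast
    then have "x = 0 \<or> x = 1 \<or> x = 2 \<or> x = 3" using assms by auto
    then show "y \<in> RR (0 \<in> J) (1 \<in> J) (2 \<in> J) (3 \<in> J)" using x r_eqs unfolding RR_def by auto
  qed
  have m: "0 \<in> J \<Longrightarrow> R0 \<in> rho n ` J" "1 \<in> J \<Longrightarrow> R1 \<in> rho n ` J" "2 \<in> J \<Longrightarrow> R2 \<in> rho n ` J"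
    "3 \<in> J \<Longrightarrow> R3 \<in> rho n ` J" using r_eqs by (metis imageI)+
  show "RR (0 \<in> J) (1 \<in> J) (2 \<in> J) (3 \<in> J) \<subseteq> rho n ` J"
    unfolding RR_def using m by auto
qed

lemma strC: "string_C_group SG 4 (rho n)"
proof -
  have l4: "{..<4::nat} = {0,1,2,3}" by auto
  have main: "Gen (rho n ` J) \<inter> Gen (rho n ` K) = Gen (rho n ` (J \<inter> K))"
    if J: "J \<subseteq> {0,1,2,3}" and K: "K \<subseteq> {0,1,2,3}" for J K
  proof
    show "Gen (rho n ` (J \<inter> K)) \<subseteq> Gen (rho n ` J) \<inter> Gen (rho n ` K)"
      using gen_mono[of "rho n ` (J \<inter> K)" "rho n ` J"] gen_mono[of "rho n ` (J \<inter> K)" "rho n ` K"] by blast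
    define J' where "J' = J \<union> ({0,1,2,3} - K)"
    have J': "J' \<subseteq> {0,1,2,3}" using J unfolding J'_def by auto
    have I: "J' \<inter> K = J \<inter> K" unfolding J'_def by auto
    have IK: "J' \<inter> K \<subseteq> {0,1,2,3}" using K by auto
    have cov: "(i \<in> J' \<or> i \<in> K)" if "i \<in> {0,1,2,3}" for i using that unfolding J'_def by auto
    have "Gen (rho n ` J) \<subseteq> Gen (rho n ` J')" by (rule gen_mono) (auto simp: J'_def)
    moreover have "Gen (rho n ` J') \<inter> Gen (rho n ` K) \<subseteq> Gen (rho n ` (J' \<inter> K))"
      unfolding img[OF J'] img[OF K] img[OF IK] Int_iff
      by (rule mainb) (use cov in auto)
    ultimately show "Gen (rho n ` J) \<inter> Gen (rho n ` K) \<subseteq> Gen (rho n ` (J \<inter> K))" unfolding I by blast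
  qed
  show ?thesis unfolding string_C_group_def l4 using sggi_ok main by blast
qed

end

theorem proposition3p9:
  fixes n :: nat
  assumes "n \<ge> 11" and "n mod 4 = 3"
  shows "generate (sym_group n) (rho n ` {..<4}) = carrier (sym_group n)
         \<and> string_C_group (sym_group n) 4 (rho n)"
proof -
  interpret L n using assms by unfold_locales
  show ?thesis using gen_all rho_img strC by simp
qed


end
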